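(* Let $K_{m_1,m_2}$ be the complete bipartite graph with bipartition $(X,Y)$, $|X|=m_1$, $|Y|=m_2$, where $2\le m_1\le m_2$, and let $s\ge 2$ be an integer. Then: (1) if $s\le m_2-m_1+2$, then $\kappa^*_{K_{m_1,m_2}}(S)=m_1$ for every $S\subseteq X\cup Y$ with $|S|=s$ and $S\not\subseteq X$; (2) if $2\le s\le m_1$, then $\kappa^*_{K_{m_1,m_2}}(S)=m_2$ for every $S\subseteq X$ with $|S|=s$; (3) if $m_2-m_1+3\le s\le m_1+m_2$, then $\kappa_s^*(K_{m_1,m_2})\ge m_1-\frac{m_1+s-m_2+2}{3}$.
   Context: For $S\subseteq V(G)$ with $|S|\ge 2$, an $S$-Steiner tree of $G$ is a subtree $T$ of $G$ with $S\subseteq V(T)$ all of whose leaves belong to $S$. A family of $S$-Steiner trees $T_1,\dots,T_k$ is completely independent if for all $1\le p<q\le k$: $E(T_p)\cap E(T_q)=\emptyset$, $V(T_p)\cap V(T_q)=S$, and for any two vertices $x_1,x_2\in S$ the $(x_1,x_2)$-paths in $T_p$ and in $T_q$ are internally disjoint. $\kappa^*_G(S)$ is the maximum number of trees in a completely independent family of $S$-Steiner trees in $G$, and $\kappa_s^*(G)=\min\{\kappa^*_G(S): S\subseteq V(G),\ |S|=s\}$. *)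

theory Defs
  imports Complex_Main
begin

text \<open>A (simple, undirected) graph is a pair (V, E) with E a set of 2-element subsets of V.\<close>

definition is_path :: "'a set set \<Rightarrow> 'a \<Rightarrow> 'a \<Rightarrow> 'a list \<Rightarrow> bool" where
  "is_path ET x y p \<longleftrightarrow> p \<noteq> [] \<and> hd p = x \<and> last p = y \<and> distinct p \<and>
     (\<forall>i. Suc i < length p \<longrightarrow> {p ! i, p ! Suc i} \<in> ET)"

definition internal_vertices :: "'a list \<Rightarrow> 'a set" where
  "internal_vertices p = set p - {hd p, last p}"

definition is_cycle :: "'a set set \<Rightarrow> 'a list \<Rightarrow> bool" where
  "is_cycle ET c \<longleftrightarrow> length c \<ge> 3 \<and> distinct c \<and>
     (\<forall>i. Suc i < length c \<longrightarrow> {c ! i, c ! Suc i} \<in> ET) \<and> {last c, hd c} \<in> ET"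

definition is_tree :: "'a set \<Rightarrow> 'a set set \<Rightarrow> bool" where
  "is_tree VT ET \<longleftrightarrow> finite VT \<and> VT \<noteq> {} \<and>
     (\<forall>e\<in>ET. e \<subseteq> VT \<and> card e = 2) \<and>
     (\<forall>u\<in>VT. \<forall>v\<in>VT. \<exists>p. is_path ET u v p) \<and>
     (\<nexists>c. is_cycle ET c)"

definition is_subtree :: "'a set \<times> 'a set set \<Rightarrow> 'a set \<times> 'a set set \<Rightarrow> bool" where
  "is_subtree G T \<longleftrightarrow> fst T \<subseteq> fst G \<and> snd T \<subseteq> snd G \<and> is_tree (fst T) (snd T)"

definition tree_degree :: "'a set set \<Rightarrow> 'a \<Rightarrow> nat" where
  "tree_degree ET v = card {e\<in>ET. v \<in> e}"

definition leaves :: "'a set \<times> 'a set set \<Rightarrow> 'a set" where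
  "leaves T = {v\<in>fst T. tree_degree (snd T) v = 1}"

definition steiner_tree :: "'a set \<times> 'a set set \<Rightarrow> 'a set \<Rightarrow> 'a set \<times> 'a set set \<Rightarrow> bool" where
  "steiner_tree G S T \<longleftrightarrow> is_subtree G T \<and> S \<subseteq> fst T \<and> leaves T \<subseteq> S"

definition compl_indep_family ::
  "'a set \<times> 'a set set \<Rightarrow> 'a set \<Rightarrow> nat \<Rightarrow> (nat \<Rightarrow> 'a set \<times> 'a set set) \<Rightarrow> bool" where
  "compl_indep_family G S k T \<longleftrightarrow>
     (\<forall>i<k. steiner_tree G S (T i)) \<and>
     (\<forall>p<k. \<forall>q<k. p \<noteq> q \<longrightarrow>
        snd (T p) \<inter> snd (T q) = {} \<and>
        fst (T p) \<inter> fst (T q) = S \<and>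
        (\<forall>x1\<in>S. \<forall>x2\<in>S. \<forall>P Q. is_path (snd (T p)) x1 x2 P \<and> is_path (snd (T q)) x1 x2 Q
            \<longrightarrow> internal_vertices P \<inter> internal_vertices Q = {}))"

definition kappa_star :: "'a set \<times> 'a set set \<Rightarrow> 'a set \<Rightarrow> nat" where
  "kappa_star G S = Max {k. \<exists>T. compl_indep_family G S k T}"

definition kappa_star_s :: "nat \<Rightarrow> 'a set \<times> 'a set set \<Rightarrow> nat" where
  "kappa_star_s s G = Min {kappa_star G S | S. S \<subseteq> fst G \<and> card S = s}"

definition complete_bipartite :: "'a set \<Rightarrow> 'a set \<Rightarrow> 'a set \<times> 'a set set" where
  "complete_bipartite X Y = (X \<union> Y, {{x, y} | x y. x \<in> X \<and> y \<in> Y})"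

end

theory Submission
  imports Defs
begin


lemma is_path_mono: "is_path E x y p \<Longrightarrow> E \<subseteq> E' \<Longrightarrow> is_path E' x y p"
  unfolding is_path_def by blast

lemma is_path_set:
  assumes "is_path E x y p" "\<forall>e\<in>E. e \<subseteq> V" "x \<in> V"
  shows "set p \<subseteq> V"
proof
  fix w assume "w \<in> set p"
  then obtain i where i: "i < length p" "p ! i = w" by (auto simp: in_set_conv_nth)
  show "w \<in> V"
  proof (cases i)
    case 0
    have "p ! 0 = x" using assms(1) by (auto simp: is_path_def hd_conv_nth[symmetric])
    then show ?thesis using assms i 0 by simp
  next
    case (Suc j)
    then have "{p ! j, p ! Suc j} \<in> E" using assms i unfolding is_path_def by auto
    then show ?thesis using assms i Suc by auto
  qed
qed

lemma is_path_cons: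
  assumes "is_path E u y p" "v \<notin> set p" "{v,u} \<in> E"
  shows "is_path E v y (v # p)"
  unfolding is_path_def
proof (intro conjI allI impI)
  show "last (v # p) = y" using assms by (simp add: is_path_def)
  show "distinct (v # p)" using assms by (simp add: is_path_def)
  fix i assume i: "Suc i < length (v # p)"
  show "{(v # p) ! i, (v # p) ! Suc i} \<in> E"
  proof (cases i)
    case 0 then show ?thesis using assms by (auto simp: is_path_def hd_conv_nth)
  next
    case (Suc j) then show ?thesis using assms i by (auto simp: is_path_def)
  qed
qed simp_all

lemma is_path_rev:
  assumes "is_path E x y p"
  shows "is_path E y x (rev p)"
  unfolding is_path_def
proof (intro conjI allI impI)
  show "rev p \<noteq> []" "hd (rev p) = y" "last (rev p) = x" "distinct (rev p)"
    using assms by (auto simp: is_path_def hd_rev last_rev)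
  fix i assume i: "Suc i < length (rev p)"
  let ?n = "length p"
  have e: "{p ! (?n - Suc (Suc i)), p ! Suc (?n - Suc (Suc i))} \<in> E"
    using assms i unfolding is_path_def by auto
  have "Suc (?n - Suc (Suc i)) = ?n - Suc i" using i by simp
  then show "{rev p ! i, rev p ! Suc i} \<in> E"
    using e i by (simp add: rev_nth insert_commute)
qed

lemma is_path_snoc:
  assumes "is_path E x u p" "v \<notin> set p" "{u,v} \<in> E"
  shows "is_path E x v (p @ [v])"
proof -
  have "is_path E u x (rev p)" by (rule is_path_rev[OF assms(1)])
  then have "is_path E v x (v # rev p)" using assms by (intro is_path_cons) (auto simp: insert_commute)
  then have "is_path E x v (rev (v # rev p))" by (rule is_path_rev)
  then show ?thesis by simp
qed

lemma cycle_two_nbrs: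
  assumes "is_cycle E c" "v \<in> set c"
  shows "\<exists>w1 w2. w1 \<noteq> w2 \<and> {v,w1} \<in> E \<and> {v,w2} \<in> E"
proof -
  let ?n = "length c"
  have n3: "?n \<ge> 3" and dc: "distinct c" and ed: "\<And>i. Suc i < ?n \<Longrightarrow> {c ! i, c ! Suc i} \<in> E"
    and cl: "{last c, hd c} \<in> E" using assms(1) unfolding is_cycle_def by auto
  obtain i where i: "i < ?n" "c ! i = v" using assms(2) by (auto simp: in_set_conv_nth)
  have cne: "c \<noteq> []" using n3 by auto
  have last: "last c = c ! (?n - 1)" using cne by (simp add: last_conv_nth)
  have hd: "hd c = c ! 0" using cne by (simp add: hd_conv_nth)
  have neq: "\<And>j k. j < ?n \<Longrightarrow> k < ?n \<Longrightarrow> j \<noteq> k \<Longrightarrow> c ! j \<noteq> c ! k"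
    using dc by (simp add: nth_eq_iff_index_eq)
  consider "i = 0" | "i = ?n - 1" | "0 < i \<and> i < ?n - 1" using i by linarith
  then show ?thesis
  proof cases
    case 1
    have "{v, c ! 1} \<in> E" using ed[of 0] n3 i 1 by simp
    moreover have "{v, c ! (?n - 1)} \<in> E" using cl last hd i 1 by (simp add: insert_commute)
    moreover have "c ! 1 \<noteq> c ! (?n - 1)" using neq[of 1 "?n - 1"] n3 by simp
    ultimately show ?thesis by blast
  next
    case 2
    have si: "Suc (i - 1) = i" using n3 2 by simp
    have "{c ! (i - 1), c ! Suc (i - 1)} \<in> E" using ed[of "i - 1"] n3 2 by simp
    then have "{c ! (i - 1), v} \<in> E" using si i by simp
    moreover have "{v, c ! 0} \<in> E" using cl last hd i 2 by simp
    moreover have "c ! (i - 1) \<noteq> c ! 0" using neq[of "i - 1" 0] n3 2 cne by simp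
    ultimately show ?thesis by (metis insert_commute)
  next
    case 3
    have si: "Suc (i - 1) = i" using 3 by simp
    have sn: "Suc i < ?n" using 3 by linarith
    have "{c ! (i - 1), c ! Suc (i - 1)} \<in> E" using ed[of "i - 1"] i 3 by simp
    then have e1: "{c ! (i - 1), v} \<in> E" using si i by simp
    have e2: "{v, c ! (i + 1)} \<in> E" using ed[of i] i sn by simp
    have "c ! (i - 1) \<noteq> c ! (i + 1)" using neq[of "i - 1" "i + 1"] 3 sn by simp
    then show ?thesis using e1 e2 by (metis insert_commute)
  qed
qed

lemma tree_single: "is_tree {v} {}"
proof -
  have "\<exists>p. is_path {} u w p" if "u \<in> {v}" "w \<in> {v}" for u w
    using that by (intro exI[of _ "[v]"]) (simp add: is_path_def)
  moreover have "\<not> is_cycle {} c" for c by (simp add: is_cycle_def)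
  ultimately show ?thesis unfolding is_tree_def by blast
qed

lemma tree_pendant:
  assumes t: "is_tree V E" and v: "v \<notin> V" and u: "u \<in> V"
  shows "is_tree (insert v V) (insert {v,u} E)"
proof -
  have fin: "finite V" and ev: "\<forall>e\<in>E. e \<subseteq> V \<and> card e = 2"
    and con: "\<forall>a\<in>V. \<forall>b\<in>V. \<exists>p. is_path E a b p" and nc: "\<nexists>c. is_cycle E c"
    using t unfolding is_tree_def by auto
  have uv: "u \<noteq> v" using u v by auto
  have sub: "E \<subseteq> insert {v,u} E" by auto
  have evs: "\<forall>e\<in>E. e \<subseteq> V" using ev by blast
  have pset: "v \<notin> set p" if "is_path E a b p" "a \<in> V" for a b p
  proof -
    have "set p \<subseteq> V" using is_path_set[OF that(1) evs that(2)] .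
    then show ?thesis using v by blast
  qed
  have conn: "\<exists>p. is_path (insert {v,u} E) a b p" if a: "a \<in> insert v V" and b: "b \<in> insert v V" for a b
  proof (cases "a = v")
    case True
    show ?thesis
    proof (cases "b = v")
      case True
      then show ?thesis using \<open>a = v\<close> by (intro exI[of _ "[v]"]) (simp add: is_path_def)
    next
      case False
      then have "b \<in> V" using b by auto
      then obtain p where p: "is_path E u b p" using con u by blast
      then have "is_path (insert {v,u} E) u b p" using is_path_mono[OF _ sub] by blast
      then have "is_path (insert {v,u} E) v b (v # p)" using pset[OF p u] by (intro is_path_cons) auto
      then show ?thesis using True by blast
    qed
  next
    case False
    then have aV: "a \<in> V" using a by auto
    show ?thesis
    proof (cases "b = v")
      case True
      obtain p where p: "is_path E a u p" using con u aV by blast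
      then have "is_path (insert {v,u} E) a u p" using is_path_mono[OF _ sub] by blast
      then have "is_path (insert {v,u} E) a v (p @ [v])" using pset[OF p aV] by (intro is_path_snoc) (auto simp: insert_commute)
      then show ?thesis using True by blast
    next
      case False
      then have "b \<in> V" using b by auto
      then obtain p where "is_path E a b p" using con aV by blast
      then show ?thesis using is_path_mono[OF _ sub] by blast
    qed
  qed
  have nocyc: "\<not> is_cycle (insert {v,u} E) c" for c
  proof
    assume cy: "is_cycle (insert {v,u} E) c"
    show False
    proof (cases "v \<in> set c")
      case True
      then obtain w1 w2 where w: "w1 \<noteq> w2" "{v,w1} \<in> insert {v,u} E" "{v,w2} \<in> insert {v,u} E"
        using cycle_two_nbrs[OF cy] by blast
      have "w = u" if "{v,w} \<in> insert {v,u} E" for w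
      proof -
        have "{v,w} \<notin> E" using evs v by blast
        then have "{v,w} = {v,u}" using that by auto
        then show ?thesis using uv by (auto simp: doubleton_eq_iff)
      qed
      then show False using w by blast
    next
      case False
      have "is_cycle E c" unfolding is_cycle_def
      proof (intro conjI allI impI)
        show "length c \<ge> 3" "distinct c" using cy by (auto simp: is_cycle_def)
        fix i assume i: "Suc i < length c"
        have "{c ! i, c ! Suc i} \<in> insert {v,u} E" using cy i by (auto simp: is_cycle_def)
        moreover have "v \<notin> {c ! i, c ! Suc i}" using False i by auto
        ultimately show "{c ! i, c ! Suc i} \<in> E" by auto
      next
        have ne: "c \<noteq> []" using cy by (auto simp: is_cycle_def)
        have "{last c, hd c} \<in> insert {v,u} E" using cy by (auto simp: is_cycle_def)
        moreover have "v \<notin> {last c, hd c}" using False ne by auto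
        ultimately show "{last c, hd c} \<in> E" by auto
      qed
      then show False using nc by blast
    qed
  qed
  have "\<forall>e\<in>insert {v,u} (E). e \<subseteq> insert v V \<and> card e = 2"
    using ev u uv by auto
  then show ?thesis unfolding is_tree_def
    using fin conn nocyc by blast
qed

lemma tree_attach:
  assumes "is_tree V E" "finite L" "L \<inter> V = {}" "\<forall>l\<in>L. h l \<in> V"
  shows "is_tree (V \<union> L) (E \<union> (\<lambda>l. {l, h l}) ` L)"
  using assms(2,3,4)
proof (induction L rule: finite_induct)
  case empty then show ?case using assms(1) by simp
next
  case (insert l L)
  have t: "is_tree (V \<union> L) (E \<union> (\<lambda>l. {l, h l}) ` L)"
    apply (rule insert.IH) using insert.prems by auto
  have l1: "l \<notin> V \<union> L" using insert by auto
  have l2: "h l \<in> V \<union> L" using insert by auto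
  have "is_tree (insert l (V \<union> L)) (insert {l, h l} (E \<union> (\<lambda>l. {l, h l}) ` L))"
    by (rule tree_pendant[OF t l1 l2])
  moreover have "insert l (V \<union> L) = V \<union> insert l L" by auto
  moreover have "insert {l, h l} (E \<union> (\<lambda>l. {l, h l}) ` L) = E \<union> (\<lambda>l. {l, h l}) ` insert l L" by auto
  ultimately show ?case by metis
qed

lemma path_internal_deg:
  assumes p: "is_path E x y p" and fin: "finite E" and v: "v \<in> internal_vertices p"
  shows "2 \<le> tree_degree E v"
proof -
  have vp: "v \<in> set p" "v \<noteq> hd p" "v \<noteq> last p" using v by (auto simp: internal_vertices_def)
  obtain i where i: "i < length p" "p ! i = v" using vp by (auto simp: in_set_conv_nth)
  have ne: "p \<noteq> []" and dp: "distinct p" and ed: "\<And>j. Suc j < length p \<Longrightarrow> {p ! j, p ! Suc j} \<in> E"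
    using p by (auto simp: is_path_def)
  have "i \<noteq> 0" using vp i ne by (metis hd_conv_nth)
  moreover have "i \<noteq> length p - 1" using vp i ne by (auto simp: last_conv_nth)
  ultimately have i0: "0 < i" "i + 1 < length p" using i by auto
  have neq: "\<And>j k. j < length p \<Longrightarrow> k < length p \<Longrightarrow> j \<noteq> k \<Longrightarrow> p ! j \<noteq> p ! k"
    using dp by (simp add: nth_eq_iff_index_eq)
  define e1 where "e1 = {p ! (i - 1), v}"
  define e2 where "e2 = {v, p ! (i + 1)}"
  have e1: "e1 \<in> E" using ed[of "i - 1"] i0 i by (simp add: e1_def)
  have e2: "e2 \<in> E" using ed[of i] i0 i by (simp add: e2_def)
  have a1: "p ! (i - 1) \<noteq> p ! (i + 1)" "p ! (i - 1) \<noteq> v" using neq i0 i by auto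
  have "e1 \<noteq> e2" using a1 by (auto simp: e1_def e2_def doubleton_eq_iff)
  moreover have "{e1, e2} \<subseteq> {e \<in> E. v \<in> e}" using e1 e2 by (auto simp: e1_def e2_def)
  ultimately have "card {e1, e2} \<le> card {e \<in> E. v \<in> e}" using fin by (intro card_mono) auto
  then show ?thesis using \<open>e1 \<noteq> e2\<close> by (simp add: tree_degree_def)
qed




definition core_edges :: "'a set \<Rightarrow> 'a set \<Rightarrow> 'a \<Rightarrow> 'a \<Rightarrow> 'a set set" where
  "core_edges Xc Yc rx ry = {{x,y} | x y. x \<in> Xc \<and> y \<in> Yc \<and> (x = rx \<or> y = ry)}"

definition gedges :: "'a set \<Rightarrow> 'a set \<Rightarrow> 'a set \<Rightarrow> 'a \<Rightarrow> 'a \<Rightarrow> ('a \<Rightarrow> 'a) \<Rightarrow> 'a set set" where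
  "gedges S Xc Yc rx ry h = core_edges Xc Yc rx ry \<union> (\<lambda>l. {l, h l}) ` (S - (Xc \<union> Yc))"

definition good_core :: "'a set \<Rightarrow> 'a set \<Rightarrow> 'a set \<Rightarrow> 'a set \<Rightarrow> 'a set \<Rightarrow> 'a \<Rightarrow> 'a \<Rightarrow> ('a \<Rightarrow> 'a) \<Rightarrow> bool" where
  "good_core X Y S Xc Yc rx ry h \<longleftrightarrow>
     Xc \<subseteq> X \<and> Yc \<subseteq> Y \<and>
     (Xc \<noteq> {} \<longrightarrow> rx \<in> Xc) \<and> (Yc \<noteq> {} \<longrightarrow> ry \<in> Yc) \<and>
     (Xc = {} \<longrightarrow> Yc = {ry}) \<and> (Yc = {} \<longrightarrow> Xc = {rx}) \<and>
     (\<forall>l \<in> S - (Xc \<union> Yc). (l \<in> X \<longrightarrow> h l \<in> Yc) \<and> (l \<in> Y \<longrightarrow> h l \<in> Xc)) \<and>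
     (\<forall>v \<in> Xc - S. v = rx \<and> 2 \<le> card (Yc \<union> {w \<in> S - (Xc \<union> Yc). w \<in> Y \<and> h w = v})) \<and>
     (\<forall>v \<in> Yc - S. v = ry \<and> 2 \<le> card (Xc \<union> {w \<in> S - (Xc \<union> Yc). w \<in> X \<and> h w = v}))"

lemma good_coreD:
  assumes "good_core X Y S Xc Yc rx ry h"
  shows "Xc \<subseteq> X" "Yc \<subseteq> Y" "Xc \<noteq> {} \<Longrightarrow> rx \<in> Xc" "Yc \<noteq> {} \<Longrightarrow> ry \<in> Yc"
    "Xc = {} \<Longrightarrow> Yc = {ry}" "Yc = {} \<Longrightarrow> Xc = {rx}"
    "\<And>l. l \<in> S - (Xc \<union> Yc) \<Longrightarrow> l \<in> X \<Longrightarrow> h l \<in> Yc"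
    "\<And>l. l \<in> S - (Xc \<union> Yc) \<Longrightarrow> l \<in> Y \<Longrightarrow> h l \<in> Xc"
    "\<And>v. v \<in> Xc - S \<Longrightarrow> v = rx"
    "\<And>v. v \<in> Xc - S \<Longrightarrow> 2 \<le> card (Yc \<union> {w \<in> S - (Xc \<union> Yc). w \<in> Y \<and> h w = v})"
    "\<And>v. v \<in> Yc - S \<Longrightarrow> v = ry"
    "\<And>v. v \<in> Yc - S \<Longrightarrow> 2 \<le> card (Xc \<union> {w \<in> S - (Xc \<union> Yc). w \<in> X \<and> h w = v})"
  using assms unfolding good_core_def by blast+

lemma core_tree:
  assumes XY: "X \<inter> Y = {}" and fx: "finite Xc" and fy: "finite Yc"
    and g: "good_core X Y S Xc Yc rx ry h"
  shows "is_tree (Xc \<union> Yc) (core_edges Xc Yc rx ry)"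
proof -
  have sx: "Xc \<subseteq> X" and sy: "Yc \<subseteq> Y" and rx: "Xc \<noteq> {} \<Longrightarrow> rx \<in> Xc" and ry: "Yc \<noteq> {} \<Longrightarrow> ry \<in> Yc"
    and ex: "Xc = {} \<Longrightarrow> Yc = {ry}" and ey: "Yc = {} \<Longrightarrow> Xc = {rx}"
    using good_coreD(1-6)[OF g] by auto
  show ?thesis
  proof (cases "Xc = {}")
    case True
    then have "Xc \<union> Yc = {ry}" "core_edges Xc Yc rx ry = {}" using ex by (auto simp: core_edges_def)
    then show ?thesis using tree_single[of ry] tree_single[of rx] by simp
  next
    case xne: False
    show ?thesis
    proof (cases "Yc = {}")
      case True
      then have "Xc \<union> Yc = {rx}" "core_edges Xc Yc rx ry = {}" using ey by (auto simp: core_edges_def)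
      then show ?thesis using tree_single[of ry] tree_single[of rx] by simp
    next
      case yne: False
      have rxX: "rx \<in> Xc" using rx xne by blast
      have ryY: "ry \<in> Yc" using ry yne by blast
      have t1: "is_tree ({rx} \<union> Yc) ({} \<union> (\<lambda>l. {l, rx}) ` Yc)"
        apply (rule tree_attach[OF tree_single fy])
        using rxX sx sy XY by auto
      have t2: "is_tree (({rx} \<union> Yc) \<union> (Xc - {rx})) (({} \<union> (\<lambda>l. {l, rx}) ` Yc) \<union> (\<lambda>l. {l, ry}) ` (Xc - {rx}))"
        apply (rule tree_attach[OF t1])
        using fx ryY sx sy XY by auto
      have v: "({rx} \<union> Yc) \<union> (Xc - {rx}) = Xc \<union> Yc" using rxX by auto
      have e: "({} \<union> (\<lambda>l. {l, rx}) ` Yc) \<union> (\<lambda>l. {l, ry}) ` (Xc - {rx}) = core_edges Xc Yc rx ry"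
        unfolding core_edges_def using rxX ryY by (auto simp: insert_commute)
      show ?thesis using t2 v e by metis
    qed
  qed
qed

lemma deg_ge_card:
  assumes "finite E" "\<forall>n\<in>N. {v,n} \<in> E" "v \<notin> N"
  shows "card N \<le> tree_degree E v"
proof -
  have inj: "inj_on (\<lambda>n. {v,n}) N" using assms(3) by (auto simp: inj_on_def doubleton_eq_iff)
  have "(\<lambda>n. {v,n}) ` N \<subseteq> {e\<in>E. v \<in> e}" using assms(2) by auto
  then have "card ((\<lambda>n. {v,n}) ` N) \<le> card {e\<in>E. v \<in> e}" using assms(1) by (intro card_mono) auto
  then show ?thesis using card_image[OF inj] by (simp add: tree_degree_def)
qed

lemma gtree_props:
  assumes fX: "finite X" and fY: "finite Y" and XY: "X \<inter> Y = {}" and SXY: "S \<subseteq> X \<union> Y"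
    and g: "good_core X Y S Xc Yc rx ry h"
  shows "steiner_tree (complete_bipartite X Y) S (S \<union> Xc \<union> Yc, gedges S Xc Yc rx ry h)"
    and "\<And>x1 x2 p. is_path (gedges S Xc Yc rx ry h) x1 x2 p \<Longrightarrow> internal_vertices p \<subseteq> Xc \<union> Yc"
    and "\<And>e. e \<in> gedges S Xc Yc rx ry h \<Longrightarrow> \<exists>x y. x \<in> X \<and> y \<in> Y \<and> e = {x,y} \<and>
            ((x \<in> Xc \<and> y \<in> Yc) \<or> (y \<in> S - (Xc \<union> Yc) \<and> h y = x \<and> x \<in> Xc) \<or> (x \<in> S - (Xc \<union> Yc) \<and> h x = y \<and> y \<in> Yc))"
proof -
  define E where "E = gedges S Xc Yc rx ry h"
  define L where "L = S - (Xc \<union> Yc)"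
  have sx: "Xc \<subseteq> X" and sy: "Yc \<subseteq> Y" 
    and hL: "\<And>l. l \<in> L \<Longrightarrow> (l \<in> X \<longrightarrow> h l \<in> Yc) \<and> (l \<in> Y \<longrightarrow> h l \<in> Xc)"
    and dX: "\<And>v. v \<in> Xc - S \<Longrightarrow> v = rx \<and> 2 \<le> card (Yc \<union> {w \<in> L. w \<in> Y \<and> h w = v})"
    and dY: "\<And>v. v \<in> Yc - S \<Longrightarrow> v = ry \<and> 2 \<le> card (Xc \<union> {w \<in> L. w \<in> X \<and> h w = v})"
    using g unfolding good_core_def L_def by auto
  have fx: "finite Xc" using sx fX finite_subset by blast
  have fy: "finite Yc" using sy fY finite_subset by blast
  have fL: "finite L" using SXY fX fY finite_subset unfolding L_def by (metis finite_Diff finite_UnI)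
  have hLV: "\<forall>l\<in>L. h l \<in> Xc \<union> Yc"
  proof
    fix l assume l: "l \<in> L"
    then have "l \<in> X \<or> l \<in> Y" using SXY unfolding L_def by auto
    then show "h l \<in> Xc \<union> Yc" using hL[OF l] by auto
  qed
  have tree: "is_tree ((Xc \<union> Yc) \<union> L) (core_edges Xc Yc rx ry \<union> (\<lambda>l. {l, h l}) ` L)"
    apply (rule tree_attach[OF core_tree[OF XY fx fy g] fL])
    using hLV unfolding L_def by auto
  have V: "(Xc \<union> Yc) \<union> L = S \<union> Xc \<union> Yc" unfolding L_def by auto
  have Edef: "E = core_edges Xc Yc rx ry \<union> (\<lambda>l. {l, h l}) ` L"
    unfolding E_def gedges_def L_def by simp
  have form: "\<exists>x y. x \<in> X \<and> y \<in> Y \<and> e = {x,y} \<and>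
            ((x \<in> Xc \<and> y \<in> Yc) \<or> (y \<in> L \<and> h y = x \<and> x \<in> Xc) \<or> (x \<in> L \<and> h x = y \<and> y \<in> Yc))"
    if e: "e \<in> E" for e
  proof -
    consider (c) "e \<in> core_edges Xc Yc rx ry" | (p) l where "l \<in> L" "e = {l, h l}" using e Edef by auto
    then show ?thesis
    proof cases
      case c
      then obtain x y where "e = {x,y}" "x \<in> Xc" "y \<in> Yc" unfolding core_edges_def by auto
      then show ?thesis using sx sy by blast
    next
      case p
      then have "l \<in> X \<or> l \<in> Y" using SXY unfolding L_def by auto
      then show ?thesis
      proof
        assume lX: "l \<in> X"
        then have "h l \<in> Yc" using hL[OF p(1)] by auto
        then show ?thesis using lX p sy by blast
      next
        assume lY: "l \<in> Y"
        then have "h l \<in> Xc" using hL[OF p(1)] by auto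
        then have "{l, h l} = {h l, l}" "h l \<in> X" using sx by (auto simp: insert_commute)
        then show ?thesis using lY p \<open>h l \<in> Xc\<close> by metis
      qed
    qed
  qed
  then show "\<And>e. e \<in> gedges S Xc Yc rx ry h \<Longrightarrow> \<exists>x y. x \<in> X \<and> y \<in> Y \<and> e = {x,y} \<and>
            ((x \<in> Xc \<and> y \<in> Yc) \<or> (y \<in> S - (Xc \<union> Yc) \<and> h y = x \<and> x \<in> Xc) \<or> (x \<in> S - (Xc \<union> Yc) \<and> h x = y \<and> y \<in> Yc))"
    unfolding E_def L_def by blast
  have EG: "E \<subseteq> snd (complete_bipartite X Y)"
  proof
    fix e assume "e \<in> E"
    then obtain x y where "x \<in> X" "y \<in> Y" "e = {x,y}" using form by blast
    then show "e \<in> snd (complete_bipartite X Y)" unfolding complete_bipartite_def by auto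
  qed
  have fE: "finite E"
  proof -
    have "E \<subseteq> Pow (X \<union> Y)" using EG unfolding complete_bipartite_def by auto
    then show ?thesis using fX fY by (meson finite_Pow_iff finite_UnI finite_subset)
  qed
  have pend: "tree_degree E v \<le> 1" if v: "v \<notin> Xc \<union> Yc" for v
  proof -
    have "{e\<in>E. v \<in> e} \<subseteq> {{v, h v}}"
    proof
      fix e assume "e \<in> {e\<in>E. v \<in> e}"
      then have e: "e \<in> E" "v \<in> e" by auto
      consider (c) "e \<in> core_edges Xc Yc rx ry" | (p) l where "l \<in> L" "e = {l, h l}" using e Edef by auto
      then show "e \<in> {{v, h v}}"
      proof cases
        case c
        then have "e \<subseteq> Xc \<union> Yc" unfolding core_edges_def by auto
        then show ?thesis using e v by auto
      next
        case p
        then have "h l \<in> Xc \<union> Yc" using hLV by auto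
        then have "v = l" using p e v by auto
        then show ?thesis using p by auto
      qed
    qed
    then have "card {e\<in>E. v \<in> e} \<le> card {{v, h v}}" by (intro card_mono) auto
    then show ?thesis by (simp add: tree_degree_def)
  qed
  have inner: "tree_degree E v \<ge> 2" if v: "v \<in> (Xc \<union> Yc) - S" for v
  proof (cases "v \<in> Xc")
    case True
    then have vr: "v = rx" and c2: "2 \<le> card (Yc \<union> {w \<in> L. w \<in> Y \<and> h w = v})" using dX v by auto
    have "\<forall>n\<in>Yc \<union> {w \<in> L. w \<in> Y \<and> h w = v}. {v,n} \<in> E"
    proof
      fix n assume n: "n \<in> Yc \<union> {w \<in> L. w \<in> Y \<and> h w = v}"
      then show "{v,n} \<in> E"
      proof
        assume "n \<in> Yc" then have "{v,n} \<in> core_edges Xc Yc rx ry" unfolding core_edges_def using True vr by auto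
        then show ?thesis using Edef by auto
      next
        assume "n \<in> {w \<in> L. w \<in> Y \<and> h w = v}"
        then have "n \<in> L" "h n = v" by auto
        then have "{n, h n} \<in> E" using Edef by auto
        then show ?thesis using \<open>h n = v\<close> by (simp add: insert_commute)
      qed
    qed
    moreover have "v \<notin> Yc \<union> {w \<in> L. w \<in> Y \<and> h w = v}" using True sx sy XY by auto
    ultimately show ?thesis using deg_ge_card[OF fE] c2 by (meson le_trans)
  next
    case False
    then have vY: "v \<in> Yc" using v by auto
    then have vr: "v = ry" and c2: "2 \<le> card (Xc \<union> {w \<in> L. w \<in> X \<and> h w = v})" using dY v by auto
    have "\<forall>n\<in>Xc \<union> {w \<in> L. w \<in> X \<and> h w = v}. {v,n} \<in> E"
    proof
      fix n assume n: "n \<in> Xc \<union> {w \<in> L. w \<in> X \<and> h w = v}"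
      then show "{v,n} \<in> E"
      proof
        assume "n \<in> Xc" then have "{n,v} \<in> core_edges Xc Yc rx ry" unfolding core_edges_def using vY vr by auto
        then show ?thesis using Edef by (auto simp: insert_commute)
      next
        assume "n \<in> {w \<in> L. w \<in> X \<and> h w = v}"
        then have "n \<in> L" "h n = v" by auto
        then have "{n, h n} \<in> E" using Edef by auto
        then show ?thesis using \<open>h n = v\<close> by (simp add: insert_commute)
      qed
    qed
    moreover have "v \<notin> Xc \<union> {w \<in> L. w \<in> X \<and> h w = v}" using vY sx sy XY by auto
    ultimately show ?thesis using deg_ge_card[OF fE] c2 by (meson le_trans)
  qed
  have intv: "internal_vertices p \<subseteq> Xc \<union> Yc" if p: "is_path E x1 x2 p" for x1 x2 p
  proof
    fix v assume "v \<in> internal_vertices p"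
    then have "2 \<le> tree_degree E v" using path_internal_deg[OF p fE] by blast
    then show "v \<in> Xc \<union> Yc" using pend by fastforce
  qed
  then show "\<And>x1 x2 p. is_path (gedges S Xc Yc rx ry h) x1 x2 p \<Longrightarrow> internal_vertices p \<subseteq> Xc \<union> Yc"
    unfolding E_def by blast
  have lv: "leaves (S \<union> Xc \<union> Yc, E) \<subseteq> S"
  proof
    fix v assume "v \<in> leaves (S \<union> Xc \<union> Yc, E)"
    then have "v \<in> S \<union> Xc \<union> Yc" "tree_degree E v = 1" unfolding leaves_def by auto
    then show "v \<in> S" using inner by fastforce
  qed
  have "is_tree (S \<union> Xc \<union> Yc) E" using tree V Edef by metis
  moreover have "S \<union> Xc \<union> Yc \<subseteq> fst (complete_bipartite X Y)" using SXY sx sy unfolding complete_bipartite_def by auto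
  ultimately show "steiner_tree (complete_bipartite X Y) S (S \<union> Xc \<union> Yc, gedges S Xc Yc rx ry h)"
    unfolding steiner_tree_def is_subtree_def using EG lv E_def by auto
qed



lemma bip_eq:
  assumes "X \<inter> Y = {}" "x \<in> X" "y \<in> Y" "x' \<in> X" "y' \<in> Y" "{x,y} = {x',y'}"
  shows "x = x' \<and> y = y'"
  using assms by (auto simp: doubleton_eq_iff)

lemma family_from_cores:
  assumes fX: "finite X" and fY: "finite Y" and XY: "X \<inter> Y = {}" and SXY: "S \<subseteq> X \<union> Y"
    and g: "\<forall>t<k. good_core X Y S (Xc t) (Yc t) (rx t) (ry t) (h t)"
    and dis: "\<forall>t<k. \<forall>u<k. t \<noteq> u \<longrightarrow> (Xc t \<union> Yc t) \<inter> (Xc u \<union> Yc u) = {}"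
    and nc: "\<forall>t<k. \<forall>u<k. t \<noteq> u \<longrightarrow> (\<forall>a \<in> S \<inter> Xc t. \<forall>b \<in> S \<inter> Yc u. \<not> (h t b = a \<and> h u a = b))"
  shows "compl_indep_family (complete_bipartite X Y) S k
           (\<lambda>t. (S \<union> Xc t \<union> Yc t, gedges S (Xc t) (Yc t) (rx t) (ry t) (h t)))"
  unfolding compl_indep_family_def
proof (intro conjI allI impI)
  fix i assume "i < k"
  then show "steiner_tree (complete_bipartite X Y) S
      ((\<lambda>t. (S \<union> Xc t \<union> Yc t, gedges S (Xc t) (Yc t) (rx t) (ry t) (h t))) i)"
    using gtree_props(1)[OF fX fY XY SXY] g by auto
next
  fix p q assume p: "p < k" and q: "q < k" and pq: "p \<noteq> q"
  have D: "(Xc p \<union> Yc p) \<inter> (Xc q \<union> Yc q) = {}" using dis p q pq by blast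
  show "fst (S \<union> Xc p \<union> Yc p, gedges S (Xc p) (Yc p) (rx p) (ry p) (h p)) \<inter>
        fst (S \<union> Xc q \<union> Yc q, gedges S (Xc q) (Yc q) (rx q) (ry q) (h q)) = S"
    using D by auto
  show "\<forall>x1\<in>S. \<forall>x2\<in>S. \<forall>P Q.
          is_path (snd (S \<union> Xc p \<union> Yc p, gedges S (Xc p) (Yc p) (rx p) (ry p) (h p))) x1 x2 P \<and>
          is_path (snd (S \<union> Xc q \<union> Yc q, gedges S (Xc q) (Yc q) (rx q) (ry q) (h q))) x1 x2 Q \<longrightarrow>
          internal_vertices P \<inter> internal_vertices Q = {}"
  proof (intro ballI allI impI)
    fix x1 x2 P Q
    assume "is_path (snd (S \<union> Xc p \<union> Yc p, gedges S (Xc p) (Yc p) (rx p) (ry p) (h p))) x1 x2 P \<and>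
          is_path (snd (S \<union> Xc q \<union> Yc q, gedges S (Xc q) (Yc q) (rx q) (ry q) (h q))) x1 x2 Q"
    then have P: "is_path (gedges S (Xc p) (Yc p) (rx p) (ry p) (h p)) x1 x2 P"
      and Q: "is_path (gedges S (Xc q) (Yc q) (rx q) (ry q) (h q)) x1 x2 Q" by auto
    have "internal_vertices P \<subseteq> Xc p \<union> Yc p"
      using gtree_props(2)[OF fX fY XY SXY _ P] g p by blast
    moreover have "internal_vertices Q \<subseteq> Xc q \<union> Yc q"
      using gtree_props(2)[OF fX fY XY SXY _ Q] g q by blast
    ultimately show "internal_vertices P \<inter> internal_vertices Q = {}" using D by blast
  qed
  show "snd (S \<union> Xc p \<union> Yc p, gedges S (Xc p) (Yc p) (rx p) (ry p) (h p)) \<inter>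
        snd (S \<union> Xc q \<union> Yc q, gedges S (Xc q) (Yc q) (rx q) (ry q) (h q)) = {}"
  proof (rule ccontr)
    assume "snd (S \<union> Xc p \<union> Yc p, gedges S (Xc p) (Yc p) (rx p) (ry p) (h p)) \<inter>
        snd (S \<union> Xc q \<union> Yc q, gedges S (Xc q) (Yc q) (rx q) (ry q) (h q)) \<noteq> {}"
    then obtain e where ep: "e \<in> gedges S (Xc p) (Yc p) (rx p) (ry p) (h p)"
      and eq: "e \<in> gedges S (Xc q) (Yc q) (rx q) (ry q) (h q)" by auto
    have gp: "good_core X Y S (Xc p) (Yc p) (rx p) (ry p) (h p)" using g p by blast
    have gq: "good_core X Y S (Xc q) (Yc q) (rx q) (ry q) (h q)" using g q by blast
    obtain x y where xy: "x \<in> X" "y \<in> Y" "e = {x,y}"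
      and fp: "(x \<in> Xc p \<and> y \<in> Yc p) \<or> (y \<in> S - (Xc p \<union> Yc p) \<and> h p y = x \<and> x \<in> Xc p) \<or>
               (x \<in> S - (Xc p \<union> Yc p) \<and> h p x = y \<and> y \<in> Yc p)"
      using gtree_props(3)[OF fX fY XY SXY gp ep] by blast
    obtain x' y' where xy': "x' \<in> X" "y' \<in> Y" "e = {x',y'}"
      and fq': "(x' \<in> Xc q \<and> y' \<in> Yc q) \<or> (y' \<in> S - (Xc q \<union> Yc q) \<and> h q y' = x' \<and> x' \<in> Xc q) \<or>
               (x' \<in> S - (Xc q \<union> Yc q) \<and> h q x' = y' \<and> y' \<in> Yc q)"
      using gtree_props(3)[OF fX fY XY SXY gq eq] by blast
    have "x = x' \<and> y = y'" using bip_eq[OF XY xy(1,2) xy'(1,2)] xy(3) xy'(3) by simp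
    then have fq: "(x \<in> Xc q \<and> y \<in> Yc q) \<or> (y \<in> S - (Xc q \<union> Yc q) \<and> h q y = x \<and> x \<in> Xc q) \<or>
               (x \<in> S - (Xc q \<union> Yc q) \<and> h q x = y \<and> y \<in> Yc q)" using fq' by simp
    have n1: "\<not> (h p y = x \<and> h q x = y)" if "x \<in> S \<inter> Xc p" "y \<in> S \<inter> Yc q"
      using nc p q pq that by blast
    have n2: "\<not> (h q y = x \<and> h p x = y)" if "x \<in> S \<inter> Xc q" "y \<in> S \<inter> Yc p"
      using nc p q pq that by blast
    show False using fp fq D n1 n2 by blast
  qed
qed



lemma tree_edge_at:
  assumes st: "steiner_tree G S T" and v: "v \<in> S" and w: "w \<in> S" and vw: "v \<noteq> w"
  shows "\<exists>u. {v,u} \<in> snd T"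
proof -
  have tr: "is_tree (fst T) (snd T)" and sub: "S \<subseteq> fst T"
    using st unfolding steiner_tree_def is_subtree_def by auto
  then obtain p where p: "is_path (snd T) v w p" using v w unfolding is_tree_def by blast
  have ne: "p \<noteq> []" and hd: "hd p = v" and lst: "last p = w"
    and ed: "\<And>i. Suc i < length p \<Longrightarrow> {p ! i, p ! Suc i} \<in> snd T"
    using p unfolding is_path_def by auto
  have "length p \<noteq> 1"
  proof
    assume "length p = 1"
    then obtain a where "p = [a]" by (metis One_nat_def length_0_conv length_Suc_conv)
    then show False using hd lst vw by simp
  qed
  then have "Suc 0 < length p" using ne by (cases p) auto
  then have "{p ! 0, p ! Suc 0} \<in> snd T" using ed by blast
  moreover have "p ! 0 = v" using hd ne by (simp add: hd_conv_nth)
  ultimately show ?thesis by auto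
qed

lemma family_bound_edges:
  assumes fam: "compl_indep_family G S k T" and e: "\<forall>i<k. e i \<in> snd (T i) \<and> e i \<in> M" and fM: "finite M"
  shows "k \<le> card M"
proof -
  have "inj_on e {..<k}"
  proof (rule inj_onI)
    fix i j assume i: "i \<in> {..<k}" and j: "j \<in> {..<k}" and eq: "e i = e j"
    show "i = j"
    proof (rule ccontr)
      assume "i \<noteq> j"
      then have "snd (T i) \<inter> snd (T j) = {}" using fam i j unfolding compl_indep_family_def by auto
      then show False using e i j eq by auto
    qed
  qed
  moreover have "e ` {..<k} \<subseteq> M" using e by auto
  ultimately have "card {..<k} \<le> card M" using fM by (intro card_inj_on_le) auto
  then show ?thesis by simp
qed

lemma family_bound_verts:
  assumes fam: "compl_indep_family G S k T" and w: "\<forall>i<k. w i \<in> fst (T i) - S \<and> w i \<in> M" and fM: "finite M"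
  shows "k \<le> card M"
proof -
  have "inj_on w {..<k}"
  proof (rule inj_onI)
    fix i j assume i: "i \<in> {..<k}" and j: "j \<in> {..<k}" and eq: "w i = w j"
    show "i = j"
    proof (rule ccontr)
      assume "i \<noteq> j"
      then have "fst (T i) \<inter> fst (T j) = S" using fam i j unfolding compl_indep_family_def by auto
      then show False using w i j eq by auto
    qed
  qed
  moreover have "w ` {..<k} \<subseteq> M" using w by auto
  ultimately have "card {..<k} \<le> card M" using fM by (intro card_inj_on_le) auto
  then show ?thesis by simp
qed

lemma cb_edges_finite:
  assumes "finite X" "finite Y"
  shows "finite (snd (complete_bipartite X Y))"
proof -
  have "snd (complete_bipartite X Y) \<subseteq> Pow (X \<union> Y)" unfolding complete_bipartite_def by auto
  then show ?thesis using assms by (meson finite_Pow_iff finite_UnI finite_subset)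
qed

lemma steiner_edges_sub:
  "steiner_tree G S T \<Longrightarrow> snd T \<subseteq> snd G"
  unfolding steiner_tree_def is_subtree_def by auto

lemma family_le_edges:
  assumes fX: "finite X" and fY: "finite Y" and S2: "2 \<le> card S"
    and fam: "compl_indep_family (complete_bipartite X Y) S k T"
  shows "k \<le> card (snd (complete_bipartite X Y))"
proof -
  have "S \<noteq> {}" using S2 by auto
  then obtain v where v: "v \<in> S" by auto
  have "\<exists>w. w \<in> S \<and> w \<noteq> v"
  proof (rule ccontr)
    assume "\<not> ?thesis"
    then have "S \<subseteq> {v}" by auto
    then have "card S \<le> 1" using card_mono[of "{v}" S] by simp
    then show False using S2 by simp
  qed
  then obtain w where w: "w \<in> S" "w \<noteq> v" by blast
  define e where "e i = (SOME e. e \<in> snd (T i) \<and> v \<in> e)" for i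
  have "\<forall>i<k. e i \<in> snd (T i) \<and> e i \<in> snd (complete_bipartite X Y)"
  proof (intro allI impI)
    fix i assume i: "i < k"
    have st: "steiner_tree (complete_bipartite X Y) S (T i)" using fam i unfolding compl_indep_family_def by auto
    obtain u where "{v,u} \<in> snd (T i)" using tree_edge_at[OF st v w(1)] w by metis
    then have "\<exists>e. e \<in> snd (T i) \<and> v \<in> e" by blast
    then have "e i \<in> snd (T i)" unfolding e_def by (metis (mono_tags, lifting) someI_ex)
    then show "e i \<in> snd (T i) \<and> e i \<in> snd (complete_bipartite X Y)" using steiner_edges_sub[OF st] by auto
  qed
  then show ?thesis using family_bound_edges[OF fam] cb_edges_finite[OF fX fY] by blast
qed

lemma kappa_star_ge:
  assumes fX: "finite X" and fY: "finite Y" and S2: "2 \<le> card S"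
    and fam: "compl_indep_family (complete_bipartite X Y) S k T"
  shows "k \<le> kappa_star (complete_bipartite X Y) S"
proof -
  let ?A = "{k. \<exists>T. compl_indep_family (complete_bipartite X Y) S k T}"
  have "?A \<subseteq> {..card (snd (complete_bipartite X Y))}"
    using family_le_edges[OF fX fY S2] by auto
  then have "finite ?A" using finite_subset by blast
  moreover have "k \<in> ?A" using fam by blast
  ultimately show ?thesis unfolding kappa_star_def by (rule Max_ge)
qed

lemma kappa_star_le:
  assumes fX: "finite X" and fY: "finite Y" and S2: "2 \<le> card S"
    and ub: "\<And>k T. compl_indep_family (complete_bipartite X Y) S k T \<Longrightarrow> k \<le> m"
  shows "kappa_star (complete_bipartite X Y) S \<le> m"
proof -
  let ?A = "{k. \<exists>T. compl_indep_family (complete_bipartite X Y) S k T}"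
  have "?A \<subseteq> {..card (snd (complete_bipartite X Y))}"
    using family_le_edges[OF fX fY S2] by auto
  then have "finite ?A" using finite_subset by blast
  moreover have "0 \<in> ?A" unfolding compl_indep_family_def by auto
  ultimately show ?thesis unfolding kappa_star_def using ub by (subst Max_le_iff) auto
qed

lemma ub_part1:
  assumes fX: "finite X" and fY: "finite Y" and XY: "X \<inter> Y = {}"
    and y: "y \<in> S \<inter> Y" and w: "w \<in> S" "w \<noteq> y"
    and fam: "compl_indep_family (complete_bipartite X Y) S k T"
  shows "k \<le> card X"
proof -
  define M where "M = {e \<in> snd (complete_bipartite X Y). y \<in> e}"
  have MX: "M \<subseteq> (\<lambda>x. {x,y}) ` X"
  proof
    fix e assume "e \<in> M"
    then obtain a b where ab: "a \<in> X" "b \<in> Y" "e = {a,b}" "y \<in> e"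
      unfolding M_def complete_bipartite_def by auto
    then have "b = y" using XY y by auto
    then show "e \<in> (\<lambda>x. {x,y}) ` X" using ab by auto
  qed
  have fM: "finite M" using MX fX finite_surj by blast
  have cM: "card M \<le> card X" using MX fX by (meson card_image_le card_mono finite_imageI order_trans)
  define e where "e i = (SOME e. e \<in> snd (T i) \<and> y \<in> e)" for i
  have "\<forall>i<k. e i \<in> snd (T i) \<and> e i \<in> M"
  proof (intro allI impI)
    fix i assume i: "i < k"
    have st: "steiner_tree (complete_bipartite X Y) S (T i)" using fam i unfolding compl_indep_family_def by auto
    obtain u where "{y,u} \<in> snd (T i)" using tree_edge_at[OF st _ w(1)] y w by blast
    then have "\<exists>e. e \<in> snd (T i) \<and> y \<in> e" by blast
    then have "e i \<in> snd (T i) \<and> y \<in> e i" unfolding e_def by (metis (mono_tags, lifting) someI_ex)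
    then show "e i \<in> snd (T i) \<and> e i \<in> M" using steiner_edges_sub[OF st] unfolding M_def by auto
  qed
  then have "k \<le> card M" using family_bound_edges[OF fam] fM by blast
  then show ?thesis using cM by simp
qed

lemma ub_part2:
  assumes fX: "finite X" and fY: "finite Y" and XY: "X \<inter> Y = {}"
    and SX: "S \<subseteq> X" and S2: "2 \<le> card S"
    and fam: "compl_indep_family (complete_bipartite X Y) S k T"
  shows "k \<le> card Y"
proof -
  have "S \<noteq> {}" using S2 by auto
  then obtain v where v: "v \<in> S" by auto
  have "\<exists>w. w \<in> S \<and> w \<noteq> v"
  proof (rule ccontr)
    assume "\<not> ?thesis"
    then have "S \<subseteq> {v}" by auto
    then have "card S \<le> 1" using card_mono[of "{v}" S] by simp
    then show False using S2 by simp
  qed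
  then obtain w where w: "w \<in> S" "w \<noteq> v" by blast
  define z where "z i = (SOME u. {v,u} \<in> snd (T i))" for i
  have "\<forall>i<k. z i \<in> fst (T i) - S \<and> z i \<in> Y"
  proof (intro allI impI)
    fix i assume i: "i < k"
    have st: "steiner_tree (complete_bipartite X Y) S (T i)" using fam i unfolding compl_indep_family_def by auto
    have "\<exists>u. {v,u} \<in> snd (T i)" using tree_edge_at[OF st v w(1)] w by metis
    then have zi: "{v, z i} \<in> snd (T i)" unfolding z_def by (rule someI_ex)
    then have "{v, z i} \<in> snd (complete_bipartite X Y)" using steiner_edges_sub[OF st] by auto
    then obtain a b where ab: "a \<in> X" "b \<in> Y" "{v, z i} = {a,b}" unfolding complete_bipartite_def by auto
    have vX: "v \<in> X" using v SX by auto
    then have zY: "z i \<in> Y" using ab XY by (auto simp: doubleton_eq_iff)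
    have "is_tree (fst (T i)) (snd (T i))" using st unfolding steiner_tree_def is_subtree_def by auto
    then have "z i \<in> fst (T i)" using zi unfolding is_tree_def by blast
    moreover have "z i \<notin> S" using zY SX XY by auto
    ultimately show "z i \<in> fst (T i) - S \<and> z i \<in> Y" using zY by auto
  qed
  then show ?thesis using family_bound_verts[OF fam] fY by blast
qed



lemma good_coreI:
  assumes "Xc \<subseteq> X" "Yc \<subseteq> Y" "Xc \<noteq> {} \<Longrightarrow> rx \<in> Xc" "Yc \<noteq> {} \<Longrightarrow> ry \<in> Yc"
    "Xc = {} \<Longrightarrow> Yc = {ry}" "Yc = {} \<Longrightarrow> Xc = {rx}"
    "\<And>l. l \<in> S - (Xc \<union> Yc) \<Longrightarrow> l \<in> X \<Longrightarrow> h l \<in> Yc"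
    "\<And>l. l \<in> S - (Xc \<union> Yc) \<Longrightarrow> l \<in> Y \<Longrightarrow> h l \<in> Xc"
    "\<And>v. v \<in> Xc - S \<Longrightarrow> v = rx \<and> 2 \<le> card (Yc \<union> {w \<in> S - (Xc \<union> Yc). w \<in> Y \<and> h w = v})"
    "\<And>v. v \<in> Yc - S \<Longrightarrow> v = ry \<and> 2 \<le> card (Xc \<union> {w \<in> S - (Xc \<union> Yc). w \<in> X \<and> h w = v})"
  shows "good_core X Y S Xc Yc rx ry h"
proof -
  have c3: "Xc \<noteq> {} \<longrightarrow> rx \<in> Xc" using assms(3) by (rule impI)
  have c4: "Yc \<noteq> {} \<longrightarrow> ry \<in> Yc" using assms(4) by (rule impI)
  have c5: "Xc = {} \<longrightarrow> Yc = {ry}" using assms(5) by (rule impI)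
  have c6: "Yc = {} \<longrightarrow> Xc = {rx}" using assms(6) by (rule impI)
  have c7: "\<forall>l \<in> S - (Xc \<union> Yc). (l \<in> X \<longrightarrow> h l \<in> Yc) \<and> (l \<in> Y \<longrightarrow> h l \<in> Xc)"
    using assms(7,8) by (intro ballI conjI impI)
  have c9: "\<forall>v \<in> Xc - S. v = rx \<and> 2 \<le> card (Yc \<union> {w \<in> S - (Xc \<union> Yc). w \<in> Y \<and> h w = v})"
    using assms(9) by (rule ballI)
  have c10: "\<forall>v \<in> Yc - S. v = ry \<and> 2 \<le> card (Xc \<union> {w \<in> S - (Xc \<union> Yc). w \<in> X \<and> h w = v})"
    using assms(10) by (rule ballI)
  show ?thesis unfolding good_core_def using assms(1,2) c3 c4 c5 c6 c7 c9 c10 by (intro conjI) assumption+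
qed

lemma card2I: "a \<in> A \<Longrightarrow> b \<in> A \<Longrightarrow> a \<noteq> b \<Longrightarrow> finite A \<Longrightarrow> 2 \<le> card A"
proof -
  assume "a \<in> A" "b \<in> A" "a \<noteq> b" "finite A"
  then have "card {a,b} \<le> card A" by (intro card_mono) auto
  then show "2 \<le> card A" using \<open>a \<noteq> b\<close> by simp
qed

lemma gc_T1:
  assumes fX: "finite X" and fY: "finite Y" and XY: "X \<inter> Y = {}" and SXY: "S \<subseteq> X \<union> Y"
    and x: "x \<in> X - S" and y: "y \<in> Y - S" and a: "a0 \<in> S \<inter> X" and b: "b0 \<in> S \<inter> Y"
    and h: "\<And>l. l \<in> X \<Longrightarrow> h l = y" "\<And>l. l \<in> Y \<Longrightarrow> h l = x"
  shows "good_core X Y S {x} {y} x y h"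
proof (rule good_coreI)
  have fS: "finite S" using SXY fX fY by (meson finite_UnI finite_subset)
  show "\<And>v. v \<in> {x} - S \<Longrightarrow> v = x \<and> 2 \<le> card ({y} \<union> {w \<in> S - ({x} \<union> {y}). w \<in> Y \<and> h w = v})"
  proof -
    fix v assume "v \<in> {x} - S"
    then have v: "v = x" by auto
    have m: "b0 \<in> {y} \<union> {w \<in> S - ({x} \<union> {y}). w \<in> Y \<and> h w = v}" using b h v x y by auto
    have "2 \<le> card ({y} \<union> {w \<in> S - ({x} \<union> {y}). w \<in> Y \<and> h w = v})"
      by (rule card2I[of y _ b0]) (use m b y fS in auto)
    then show "v = x \<and> 2 \<le> card ({y} \<union> {w \<in> S - ({x} \<union> {y}). w \<in> Y \<and> h w = v})"
      using v by simp
  qed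
  show "\<And>v. v \<in> {y} - S \<Longrightarrow> v = y \<and> 2 \<le> card ({x} \<union> {w \<in> S - ({x} \<union> {y}). w \<in> X \<and> h w = v})"
  proof -
    fix v assume "v \<in> {y} - S"
    then have v: "v = y" by auto
    have m: "a0 \<in> {x} \<union> {w \<in> S - ({x} \<union> {y}). w \<in> X \<and> h w = v}" using a h v x y by auto
    have "2 \<le> card ({x} \<union> {w \<in> S - ({x} \<union> {y}). w \<in> X \<and> h w = v})"
      by (rule card2I[of x _ a0]) (use m a x fS in auto)
    then show "v = y \<and> 2 \<le> card ({x} \<union> {w \<in> S - ({x} \<union> {y}). w \<in> X \<and> h w = v})"
      using v by simp
  qed
qed (use x y h in auto)

lemma gc_T2:
  assumes fX: "finite X" and fY: "finite Y" and XY: "X \<inter> Y = {}" and SXY: "S \<subseteq> X \<union> Y"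
    and x: "x \<in> S \<inter> X" and y: "y \<in> Y - S" and a: "a0 \<in> S \<inter> X" "a0 \<noteq> x"
    and h: "\<And>l. l \<in> X \<Longrightarrow> h l = y" "\<And>l. l \<in> Y \<Longrightarrow> h l = x"
  shows "good_core X Y S {x} {y} x y h"
proof (rule good_coreI)
  have fS: "finite S" using SXY fX fY by (meson finite_UnI finite_subset)
  show "\<And>v. v \<in> {y} - S \<Longrightarrow> v = y \<and> 2 \<le> card ({x} \<union> {w \<in> S - ({x} \<union> {y}). w \<in> X \<and> h w = v})"
  proof -
    fix v assume "v \<in> {y} - S"
    then have v: "v = y" by auto
    have m: "a0 \<in> {x} \<union> {w \<in> S - ({x} \<union> {y}). w \<in> X \<and> h w = v}" using a h v x y by auto
    have "2 \<le> card ({x} \<union> {w \<in> S - ({x} \<union> {y}). w \<in> X \<and> h w = v})"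
      by (rule card2I[of x _ a0]) (use m a x fS in auto)
    then show "v = y \<and> 2 \<le> card ({x} \<union> {w \<in> S - ({x} \<union> {y}). w \<in> X \<and> h w = v})"
      using v by simp
  qed
qed (use x y h in auto)

lemma gc_starX:
  assumes x: "x \<in> S \<inter> X" and A: "S \<inter> X = {x}" and SXY: "S \<subseteq> X \<union> Y"
    and h: "\<And>l. l \<in> Y \<Longrightarrow> h l = x"
  shows "good_core X Y S {x} {} x ry h"
  by (rule good_coreI) (use x A SXY h in auto)

lemma gc_starY:
  assumes fX: "finite X" and fY: "finite Y" and XY: "X \<inter> Y = {}" and SX: "S \<subseteq> X" and S2: "2 \<le> card S"
    and y: "y \<in> Y"
  shows "good_core X Y S {} {y} rx y (\<lambda>_. y)"
proof (rule good_coreI)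
  show "\<And>v. v \<in> {y} - S \<Longrightarrow> v = y \<and> 2 \<le> card ({} \<union> {w \<in> S - ({} \<union> {y}). w \<in> X \<and> (\<lambda>_. y) w = v})"
  proof -
    fix v assume "v \<in> {y} - S"
    then have v: "v = y" by auto
    have "{w \<in> S - ({} \<union> {y}). w \<in> X \<and> (\<lambda>_. y) w = v} = S" using SX v y XY by auto
    then show "v = y \<and> 2 \<le> card ({} \<union> {w \<in> S - ({} \<union> {y}). w \<in> X \<and> (\<lambda>_. y) w = v})" using v S2 by simp
  qed
qed (use y SX XY in auto)

lemma gc_G:
  assumes fX: "finite X" and fY: "finite Y" and XY: "X \<inter> Y = {}" and SXY: "S \<subseteq> X \<union> Y"
    and x: "x1 \<in> S \<inter> X" "x2 \<in> S \<inter> X" "x1 \<noteq> x2" and y: "y \<in> Y - S"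
    and h: "\<And>l. l \<in> X \<Longrightarrow> h l = y" "\<And>l. l \<in> Y \<Longrightarrow> h l \<in> {x1,x2}"
  shows "good_core X Y S {x1,x2} {y} x1 y h"
proof (rule good_coreI)
  have fS: "finite S" using SXY fX fY by (meson finite_UnI finite_subset)
  show "\<And>v. v \<in> {y} - S \<Longrightarrow> v = y \<and> 2 \<le> card ({x1,x2} \<union> {w \<in> S - ({x1,x2} \<union> {y}). w \<in> X \<and> h w = v})"
  proof -
    fix v assume "v \<in> {y} - S"
    then have v: "v = y" by auto
    have "2 \<le> card ({x1,x2} \<union> {w \<in> S - ({x1,x2} \<union> {y}). w \<in> X \<and> h w = v})"
      by (rule card2I[of x1 _ x2]) (use x fS in auto)
    then show "v = y \<and> 2 \<le> card ({x1,x2} \<union> {w \<in> S - ({x1,x2} \<union> {y}). w \<in> X \<and> h w = v})"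
      using v by simp
  qed
qed (use x y h in auto)

lemma gc_S:
  assumes x: "x1 \<in> S \<inter> X" "x2 \<in> S \<inter> X" and y: "y1 \<in> S \<inter> Y" "y2 \<in> S \<inter> Y"
    and h: "\<And>l. l \<in> X \<Longrightarrow> h l \<in> {y1,y2}" "\<And>l. l \<in> Y \<Longrightarrow> h l \<in> {x1,x2}"
  shows "good_core X Y S {x1,x2} {y1,y2} x1 y1 h"
  by (rule good_coreI) (use x y h in auto)



lemma family_exists:
  assumes "finite X" "finite Y" "X \<inter> Y = {}" "S \<subseteq> X \<union> Y"
    and "\<forall>t<k. good_core X Y S (Xc t) (Yc t) (rx t) (ry t) (h t)"
    and "\<forall>t<k. \<forall>u<k. t \<noteq> u \<longrightarrow> (Xc t \<union> Yc t) \<inter> (Xc u \<union> Yc u) = {}"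
    and "\<forall>t<k. \<forall>u<k. t \<noteq> u \<longrightarrow> (\<forall>a \<in> S \<inter> Xc t. \<forall>b \<in> S \<inter> Yc u. \<not> (h t b = a \<and> h u a = b))"
  shows "\<exists>T. compl_indep_family (complete_bipartite X Y) S k T"
  using family_from_cores[OF assms] by blast

lemma enum_set:
  assumes "finite A"
  shows "\<exists>f. (\<forall>i < card A. f i \<in> A) \<and> (\<forall>i < card A. \<forall>j < card A. f i = f j \<longleftrightarrow> i = j)"
proof -
  obtain f where f: "bij_betw f {0..<card A} A" using ex_bij_betw_nat_finite[OF assms] by blast
  have "\<forall>i < card A. f i \<in> A" using f by (auto simp: bij_betw_def)
  moreover have "\<forall>i < card A. \<forall>j < card A. f i = f j \<longleftrightarrow> i = j"
    using f unfolding bij_betw_def inj_on_def by auto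
  ultimately show ?thesis by blast
qed

lemma cons_starsY:
  assumes fX: "finite X" and fY: "finite Y" and XY: "X \<inter> Y = {}" and SX: "S \<subseteq> X" and S2: "2 \<le> card S"
  shows "\<exists>T. compl_indep_family (complete_bipartite X Y) S (card Y) T"
proof -
  obtain f where f1_: "\<forall>i < card Y. f i \<in> Y" and f2_: "\<forall>i < card Y. \<forall>j < card Y. f i = f j \<longleftrightarrow> i = j"
    using enum_set[OF fY] by blast
  note f1 = f1_[rule_format] and f2 = f2_[rule_format]
  have g: "\<forall>t<card Y. good_core X Y S {} {f t} undefined (f t) (\<lambda>_. f t)"
  proof (intro allI impI)
    fix t assume "t < card Y"
    then have "f t \<in> Y" by (rule f1)
    then show "good_core X Y S {} {f t} undefined (f t) (\<lambda>_. f t)" by (rule gc_starY[OF fX fY XY SX S2])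
  qed
  have d: "\<forall>t<card Y. \<forall>u<card Y. t \<noteq> u \<longrightarrow> ({} \<union> {f t}) \<inter> ({} \<union> {f u}) = {}"
    using f2 by auto
  have n: "\<forall>t<card Y. \<forall>u<card Y. t \<noteq> u \<longrightarrow> (\<forall>a \<in> S \<inter> {}. \<forall>b \<in> S \<inter> {f u}. \<not> ((\<lambda>_. f t) b = a \<and> (\<lambda>_. f u) a = b))"
    by simp
  have SXY: "S \<subseteq> X \<union> Y" using SX by auto
  show ?thesis
    by (rule family_exists[OF fX fY XY SXY, where Xc="\<lambda>_. {}" and Yc="\<lambda>t. {f t}" and rx="\<lambda>_. undefined" and ry=f and h="\<lambda>t _. f t", OF g d n])
qed

lemma cons_C1:
  assumes fX: "finite X" and fY: "finite Y" and XY: "X \<inter> Y = {}" and SXY: "S \<subseteq> X \<union> Y"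
    and A1: "S \<inter> X \<noteq> {}" and B1: "S \<inter> Y \<noteq> {}"
    and n1: "n1 \<le> card (X - S)" and q: "q \<le> card (S \<inter> X)"
    and G: "if card (S \<inter> X) = 1 then n1 \<le> card (Y - S) else n1 + q \<le> card (Y - S)"
  shows "\<exists>T. compl_indep_family (complete_bipartite X Y) S (n1 + q) T"
proof -
  have fF: "finite (X - S)" and fG: "finite (Y - S)" and fA: "finite (S \<inter> X)" using fX fY by auto
  obtain eF where F1_: "\<forall>i < card (X - S). eF i \<in> X - S" and F2_: "\<forall>i < card (X - S). \<forall>j < card (X - S). eF i = eF j \<longleftrightarrow> i = j"
    using enum_set[OF fF] by blast
  note F1 = F1_[rule_format] and F2 = F2_[rule_format]
  obtain eG where G1_: "\<forall>i < card (Y - S). eG i \<in> Y - S" and G2_: "\<forall>i < card (Y - S). \<forall>j < card (Y - S). eG i = eG j \<longleftrightarrow> i = j"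
    using enum_set[OF fG] by blast
  note G1 = G1_[rule_format] and G2 = G2_[rule_format]
  obtain eA where A1_: "\<forall>i < card (S \<inter> X). eA i \<in> S \<inter> X" and A2_: "\<forall>i < card (S \<inter> X). \<forall>j < card (S \<inter> X). eA i = eA j \<longleftrightarrow> i = j"
    using enum_set[OF fA] by blast
  note A1' = A1_[rule_format] and A2 = A2_[rule_format]
  obtain a0 where a0: "a0 \<in> S \<inter> X" using A1 by blast
  obtain b0 where b0: "b0 \<in> S \<inter> Y" using B1 by blast
  have na: "n1 \<le> card (Y - S)" using G by (auto split: if_splits)
  define a where "a = card (S \<inter> X)"
  have a1: "a \<ge> 1" using A1 fA unfolding a_def by (simp add: Suc_le_eq card_gt_0_iff)
  define Xc where "Xc t = (if t < n1 then {eF t} else {eA (t - n1)})" for t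
  define Yc where "Yc t = (if t < n1 then {eG t} else if a = 1 then {} else {eG t})" for t
  define rx where "rx t = (if t < n1 then eF t else eA (t - n1))" for t
  define h where "h t l = (if l \<in> X then eG t else rx t)" for t l
  show ?thesis
  proof (rule family_exists[where Xc=Xc and Yc=Yc and rx=rx and ry=eG and h=h])
    show "\<forall>t<n1 + q. good_core X Y S (Xc t) (Yc t) (rx t) (eG t) (h t)"
    proof (intro allI impI)
      fix t assume t: "t < n1 + q"
      show "good_core X Y S (Xc t) (Yc t) (rx t) (eG t) (h t)"
      proof (cases "t < n1")
        case True
        have xF: "eF t \<in> X - S" using F1 True n1 by simp
        have yG: "eG t \<in> Y - S" using G1 True na by simp
        have e: "Xc t = {eF t}" "Yc t = {eG t}" "rx t = eF t" using True by (simp_all add: Xc_def Yc_def rx_def)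
        have "good_core X Y S {eF t} {eG t} (eF t) (eG t) (h t)"
          by (rule gc_T1[OF fX fY XY SXY xF yG a0 b0]) (use XY in \<open>auto simp: h_def e\<close>)
        then show ?thesis using e by simp
      next
        case False
        have xa: "eA (t - n1) \<in> S \<inter> X" using A1' False t q by simp
        show ?thesis
        proof (cases "a = 1")
          case True
          have SA: "S \<inter> X = {eA (t - n1)}" using xa True unfolding a_def by (metis card_1_singletonE singletonD)
          have e: "Xc t = {eA (t - n1)}" "Yc t = {}" "rx t = eA (t - n1)" using True False by (simp_all add: Xc_def Yc_def rx_def)
          have "good_core X Y S {eA (t - n1)} {} (eA (t - n1)) (eG t) (h t)"
            by (rule gc_starX[OF xa SA SXY]) (use XY in \<open>auto simp: h_def e\<close>)
          then show ?thesis using e by simp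
        next
          case a2: False
          then have "2 \<le> card (S \<inter> X)" using a1 unfolding a_def by simp
          have "\<exists>a1. a1 \<in> S \<inter> X \<and> a1 \<noteq> eA (t - n1)"
          proof (rule ccontr)
            assume "\<not> ?thesis"
            then have "S \<inter> X \<subseteq> {eA (t - n1)}" by auto
            then have "card (S \<inter> X) \<le> 1" using card_mono[of "{eA (t - n1)}" "S \<inter> X"] by simp
            then show False using \<open>2 \<le> card (S \<inter> X)\<close> by simp
          qed
          then obtain a1 where a1: "a1 \<in> S \<inter> X" "a1 \<noteq> eA (t - n1)" by blast
          have yG: "eG t \<in> Y - S" using G1 t G a2 unfolding a_def by (auto split: if_splits)
          have e: "Xc t = {eA (t - n1)}" "Yc t = {eG t}" "rx t = eA (t - n1)" using a2 False by (simp_all add: Xc_def Yc_def rx_def)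
          have "good_core X Y S {eA (t - n1)} {eG t} (eA (t - n1)) (eG t) (h t)"
            by (rule gc_T2[OF fX fY XY SXY xa yG a1]) (use XY in \<open>auto simp: h_def e\<close>)
          then show ?thesis using e by simp
        qed
      qed
    qed
    have cG: "a \<noteq> 1 \<Longrightarrow> n1 + q \<le> card (Y - S)" using G unfolding a_def by auto
    have YcG: "Yc t \<subseteq> Y - S" if t: "t < n1 + q" for t
    proof (cases "Yc t = {}")
      case False
      then have "t < card (Y - S)" using cG t na unfolding Yc_def by (auto split: if_splits)
      then have "eG t \<in> Y - S" by (rule G1)
      moreover have "Yc t \<subseteq> {eG t}" unfolding Yc_def by auto
      ultimately show ?thesis by blast
    qed simp
    have YcI: "Yc t \<subseteq> {eG t}" for t unfolding Yc_def by auto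
    have XcF: "Xc t = {eF t}" "eF t \<in> X - S" if "t < n1" for t
      using that F1[of t] n1 unfolding Xc_def by auto
    have XcA: "Xc t = {eA (t - n1)}" "eA (t - n1) \<in> S \<inter> X" if "\<not> t < n1" "t < n1 + q" for t
      using that A1'[of "t - n1"] q unfolding Xc_def by auto
    show "\<forall>t<n1 + q. \<forall>u<n1 + q. t \<noteq> u \<longrightarrow> (Xc t \<union> Yc t) \<inter> (Xc u \<union> Yc u) = {}"
    proof (intro allI impI)
      fix t u assume t: "t < n1 + q" and u: "u < n1 + q" and tu: "t \<noteq> u"
      have "Xc t \<inter> Xc u = {}"
      proof (cases "t < n1"; cases "u < n1")
        assume "t < n1" "u < n1" then show ?thesis using XcF[of t] XcF[of u] F2[of t u] n1 tu by auto
      next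
        assume a: "t < n1" "\<not> u < n1" then show ?thesis using XcF[OF a(1)] XcA[OF a(2) u] by auto
      next
        assume a: "\<not> t < n1" "u < n1" then show ?thesis using XcF[OF a(2)] XcA[OF a(1) t] by auto
      next
        assume a: "\<not> t < n1" "\<not> u < n1"
        have "t - n1 < card (S \<inter> X)" "u - n1 < card (S \<inter> X)" "t - n1 \<noteq> u - n1" using a t u q tu by auto
        then have "eA (t - n1) \<noteq> eA (u - n1)" using A2 by blast
        then show ?thesis using XcA[OF a(1) t] XcA[OF a(2) u] by auto
      qed
      moreover have "Yc t \<inter> Yc u = {}"
      proof (rule ccontr)
        assume "Yc t \<inter> Yc u \<noteq> {}"
        then have ne: "Yc t \<noteq> {}" "Yc u \<noteq> {}" and eq: "eG t = eG u" using YcI[of t] YcI[of u] by auto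
        have "t < card (Y - S)" "u < card (Y - S)" using ne cG t u na unfolding Yc_def by (auto split: if_splits)
        then show False using G2 eq tu by blast
      qed
      moreover have "Xc t \<subseteq> X" "Xc u \<subseteq> X"
        using XcF(2)[of t] XcF(1)[of t] XcA[of t] t XcF(2)[of u] XcF(1)[of u] XcA[of u] u by (cases "t < n1"; cases "u < n1"; auto)+
      moreover have "Yc t \<subseteq> Y" "Yc u \<subseteq> Y" using YcG[OF t] YcG[OF u] by auto
      ultimately show "(Xc t \<union> Yc t) \<inter> (Xc u \<union> Yc u) = {}" using XY by blast
    qed
    show "\<forall>t<n1 + q. \<forall>u<n1 + q. t \<noteq> u \<longrightarrow> (\<forall>a\<in>S \<inter> Xc t. \<forall>b\<in>S \<inter> Yc u. \<not> (h t b = a \<and> h u a = b))"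
      using YcG by blast
  qed (use fX fY XY SXY in auto)
qed

lemma the_idx:
  assumes "\<forall>i<n. \<forall>j<n. f i = f j \<longleftrightarrow> i = j" "j < n"
  shows "(THE i. i < n \<and> f i = f j) = j"
  by (rule the_equality) (use assms in auto)

lemma cons_typed:
  assumes fX: "finite X" and fY: "finite Y" and XY: "X \<inter> Y = {}" and SXY: "S \<subseteq> X \<union> Y"
    and A1: "S \<inter> X \<noteq> {}" and B1: "S \<inter> Y \<noteq> {}"
    and n1: "n1 \<le> card (X - S)" and nG: "n1 + nG \<le> card (Y - S)"
    and nA: "2 * (nG + nS) \<le> card (S \<inter> X)" and nB: "2 * nS \<le> card (S \<inter> Y)"
  shows "\<exists>T. compl_indep_family (complete_bipartite X Y) S (n1 + nG + nS) T"
proof -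
  have fF: "finite (X - S)" and fG: "finite (Y - S)" and fA: "finite (S \<inter> X)" and fB: "finite (S \<inter> Y)"
    using fX fY by auto
  obtain eF where F1_: "\<forall>i < card (X - S). eF i \<in> X - S" and F2_: "\<forall>i < card (X - S). \<forall>j < card (X - S). eF i = eF j \<longleftrightarrow> i = j"
    using enum_set[OF fF] by blast
  note F1 = F1_[rule_format] and F2 = F2_[rule_format]
  obtain eG where G1_: "\<forall>i < card (Y - S). eG i \<in> Y - S" and G2_: "\<forall>i < card (Y - S). \<forall>j < card (Y - S). eG i = eG j \<longleftrightarrow> i = j"
    using enum_set[OF fG] by blast
  note G1 = G1_[rule_format] and G2 = G2_[rule_format]
  obtain eA where A1_: "\<forall>i < card (S \<inter> X). eA i \<in> S \<inter> X" and A2_: "\<forall>i < card (S \<inter> X). \<forall>j < card (S \<inter> X). eA i = eA j \<longleftrightarrow> i = j"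
    using enum_set[OF fA] by blast
  note A1' = A1_[rule_format] and A2 = A2_[rule_format]
  obtain eB where B1_: "\<forall>i < card (S \<inter> Y). eB i \<in> S \<inter> Y" and B2_: "\<forall>i < card (S \<inter> Y). \<forall>j < card (S \<inter> Y). eB i = eB j \<longleftrightarrow> i = j"
    using enum_set[OF fB] by blast
  note B1' = B1_[rule_format] and B2 = B2_[rule_format]
  obtain a0 where a0: "a0 \<in> S \<inter> X" using A1 by blast
  obtain b0 where b0: "b0 \<in> S \<inter> Y" using B1 by blast
  define a where "a = card (S \<inter> X)"
  define b where "b = card (S \<inter> Y)"
  define pA where "pA l = (THE j. j < a \<and> eA j = l) mod 2" for l
  define pB where "pB l = (THE j. j < b \<and> eB j = l) mod 2" for l
  have pA: "pA (eA j) = j mod 2" if "j < a" for j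
    unfolding pA_def a_def using the_idx[OF A2_] that a_def by simp
  have pB: "pB (eB j) = j mod 2" if "j < b" for j
    unfolding pB_def b_def using the_idx[OF B2_] that b_def by simp
  define k where "k = n1 + nG + nS"
  define Xc where "Xc t = (if t < n1 then {eF t} else {eA (2*(t-n1)), eA (2*(t-n1)+1)})" for t
  define Yc where "Yc t = (if t < n1 + nG then {eG t} else {eB (2*(t-n1-nG)), eB (2*(t-n1-nG)+1)})" for t
  define rx where "rx t = (if t < n1 then eF t else eA (2*(t-n1)))" for t
  define ry where "ry t = (if t < n1 + nG then eG t else eB (2*(t-n1-nG)))" for t
  define h where "h t l = (if l \<in> X then (if t < n1 + nG then eG t else eB (2*(t-n1-nG) + (1 - pA l)))
                          else (if t < n1 then eF t else eA (2*(t-n1) + pB l)))" for t l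
  have pAl: "pA l < 2" for l unfolding pA_def by simp
  have pBl: "pB l < 2" for l unfolding pB_def by simp
  have notX: "l \<in> Y \<Longrightarrow> l \<notin> X" for l using XY by auto
  have g: "\<forall>t<k. good_core X Y S (Xc t) (Yc t) (rx t) (ry t) (h t)"
  proof (intro allI impI)
    fix t assume t: "t < k"
    consider (T1) "t < n1" | (TG) "n1 \<le> t" "t < n1 + nG" | (TS) "n1 + nG \<le> t" by linarith
    then show "good_core X Y S (Xc t) (Yc t) (rx t) (ry t) (h t)"
    proof cases
      case T1
      have xF: "eF t \<in> X - S" using F1 T1 n1 by simp
      have yG: "eG t \<in> Y - S" using G1 T1 nG by simp
      have e: "Xc t = {eF t}" "Yc t = {eG t}" "rx t = eF t" "ry t = eG t" using T1 by (simp_all add: Xc_def Yc_def rx_def ry_def)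
      have "good_core X Y S {eF t} {eG t} (eF t) (eG t) (h t)"
        by (rule gc_T1[OF fX fY XY SXY xF yG a0 b0]) (use T1 notX in \<open>auto simp: h_def\<close>)
      then show ?thesis using e by simp
    next
      case TG
      define i where "i = t - n1"
      have i: "2 * i + 1 < a" using TG nA unfolding i_def a_def by arith
      have x1: "eA (2*i) \<in> S \<inter> X" and x2: "eA (2*i+1) \<in> S \<inter> X" using A1' i unfolding a_def by auto
      have x12: "eA (2*i) \<noteq> eA (2*i+1)" using A2[of "2*i" "2*i+1"] i unfolding a_def by simp
      have yG: "eG t \<in> Y - S" using G1 TG nG by simp
      have e: "Xc t = {eA (2*i), eA (2*i+1)}" "Yc t = {eG t}" "rx t = eA (2*i)" "ry t = eG t"
        using TG unfolding i_def by (simp_all add: Xc_def Yc_def rx_def ry_def)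
      have hY: "h t l \<in> {eA (2*i), eA (2*i+1)}" if "l \<in> Y" for l
      proof -
        have "h t l = eA (2*i + pB l)" using that notX TG unfolding h_def i_def by auto
        moreover have "pB l = 0 \<or> pB l = 1" using pBl[of l] by linarith
        ultimately show ?thesis by auto
      qed
      have "good_core X Y S {eA (2*i), eA (2*i+1)} {eG t} (eA (2*i)) (eG t) (h t)"
        by (rule gc_G[OF fX fY XY SXY x1 x2 x12 yG]) (use TG hY in \<open>auto simp: h_def\<close>)
      then show ?thesis using e by simp
    next
      case TS
      define i where "i = t - n1"
      define j where "j = t - n1 - nG"
      have i: "2 * i + 1 < a" using TS t nA unfolding i_def a_def k_def by arith
      have j: "2 * j + 1 < b" using TS t nB unfolding j_def b_def k_def by arith
      have x1: "eA (2*i) \<in> S \<inter> X" and x2: "eA (2*i+1) \<in> S \<inter> X" using A1' i unfolding a_def by auto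
      have y1: "eB (2*j) \<in> S \<inter> Y" and y2: "eB (2*j+1) \<in> S \<inter> Y" using B1' j unfolding b_def by auto
      have e: "Xc t = {eA (2*i), eA (2*i+1)}" "Yc t = {eB (2*j), eB (2*j+1)}" "rx t = eA (2*i)" "ry t = eB (2*j)"
        using TS unfolding i_def j_def by (simp_all add: Xc_def Yc_def rx_def ry_def)
      have hY: "h t l \<in> {eA (2*i), eA (2*i+1)}" if "l \<in> Y" for l
      proof -
        have "h t l = eA (2*i + pB l)" using that notX TS unfolding h_def i_def by auto
        moreover have "pB l = 0 \<or> pB l = 1" using pBl[of l] by linarith
        ultimately show ?thesis by auto
      qed
      have hX: "h t l \<in> {eB (2*j), eB (2*j+1)}" if "l \<in> X" for l
      proof -
        have "h t l = eB (2*j + (1 - pA l))" using that TS unfolding h_def j_def by auto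
        moreover have "pA l = 0 \<or> pA l = 1" using pAl[of l] by linarith
        ultimately show ?thesis by auto
      qed
      have "good_core X Y S {eA (2*i), eA (2*i+1)} {eB (2*j), eB (2*j+1)} (eA (2*i)) (eB (2*j)) (h t)"
        by (rule gc_S[OF x1 x2 y1 y2]) (use hX hY in auto)
      then show ?thesis using e by simp
    qed
  qed
  have XcX: "Xc t \<subseteq> X" if "t < k" for t
  proof (cases "t < n1")
    case True then show ?thesis using F1[of t] n1 unfolding Xc_def by auto
  next
    case False
    then have "2 * (t - n1) + 1 < a" using that nA unfolding a_def k_def by arith
    then show ?thesis using False A1'[of "2*(t-n1)"] A1'[of "2*(t-n1)+1"] unfolding Xc_def a_def by auto
  qed
  have YcY: "Yc t \<subseteq> Y" if "t < k" for t
  proof (cases "t < n1 + nG")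
    case True then show ?thesis using G1[of t] nG unfolding Yc_def by auto
  next
    case False
    then have "2 * (t - n1 - nG) + 1 < b" using that nB unfolding b_def k_def by arith
    then show ?thesis using False B1'[of "2*(t-n1-nG)"] B1'[of "2*(t-n1-nG)+1"] unfolding Yc_def b_def by auto
  qed
  have pair_dis: "{f (2*i), f (2*i+1)} \<inter> {f (2*j), f (2*j+1)} = {}"
    if inj: "\<forall>x<n. \<forall>y<n. f x = f y \<longleftrightarrow> x = y" and ij: "i \<noteq> j" "2*i+1 < n" "2*j+1 < n" for f :: "nat \<Rightarrow> 'a" and i j n
  proof -
    have "2*i \<noteq> 2*j" "2*i \<noteq> 2*j+1" "2*i+1 \<noteq> 2*j" "2*i+1 \<noteq> 2*j+1" using ij by presburger+
    then show ?thesis using inj ij by (auto simp del: mult_2)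
  qed
  have dis: "\<forall>t<k. \<forall>u<k. t \<noteq> u \<longrightarrow> (Xc t \<union> Yc t) \<inter> (Xc u \<union> Yc u) = {}"
  proof (intro allI impI)
    fix t u assume t: "t < k" and u: "u < k" and tu: "t \<noteq> u"
    have "Xc t \<inter> Xc u = {}"
    proof (cases "t < n1"; cases "u < n1")
      assume a: "t < n1" "u < n1" then show ?thesis using F2[of t u] n1 tu unfolding Xc_def by auto
    next
      assume a: "t < n1" "\<not> u < n1"
      have "2 * (u - n1) + 1 < card (S \<inter> X)" using a u nA unfolding k_def by arith
      then show ?thesis using a F1[of t] n1 A1'[of "2*(u-n1)"] A1'[of "2*(u-n1)+1"] unfolding Xc_def by auto
    next
      assume a: "\<not> t < n1" "u < n1"
      have "2 * (t - n1) + 1 < card (S \<inter> X)" using a t nA unfolding k_def by arith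
      then show ?thesis using a F1[of u] n1 A1'[of "2*(t-n1)"] A1'[of "2*(t-n1)+1"] unfolding Xc_def by auto
    next
      assume a: "\<not> t < n1" "\<not> u < n1"
      have "2 * (t - n1) + 1 < card (S \<inter> X)" "2 * (u - n1) + 1 < card (S \<inter> X)" "t - n1 \<noteq> u - n1"
        using a t u tu nA unfolding k_def by arith+
      then show ?thesis using a pair_dis[OF A2_] unfolding Xc_def by auto
    qed
    moreover have "Yc t \<inter> Yc u = {}"
    proof (cases "t < n1 + nG"; cases "u < n1 + nG")
      assume a: "t < n1 + nG" "u < n1 + nG" then show ?thesis using G2[of t u] nG tu unfolding Yc_def by auto
    next
      assume a: "t < n1 + nG" "\<not> u < n1 + nG"
      have "2 * (u - n1 - nG) + 1 < card (S \<inter> Y)" using a u nB unfolding k_def by arith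
      then show ?thesis using a G1[of t] nG B1'[of "2*(u-n1-nG)"] B1'[of "2*(u-n1-nG)+1"] unfolding Yc_def by auto
    next
      assume a: "\<not> t < n1 + nG" "u < n1 + nG"
      have "2 * (t - n1 - nG) + 1 < card (S \<inter> Y)" using a t nB unfolding k_def by arith
      then show ?thesis using a G1[of u] nG B1'[of "2*(t-n1-nG)"] B1'[of "2*(t-n1-nG)+1"] unfolding Yc_def by auto
    next
      assume a: "\<not> t < n1 + nG" "\<not> u < n1 + nG"
      have "2 * (t - n1 - nG) + 1 < card (S \<inter> Y)" "2 * (u - n1 - nG) + 1 < card (S \<inter> Y)" "t - n1 - nG \<noteq> u - n1 - nG"
        using a t u tu nB unfolding k_def by arith+
      then show ?thesis using a pair_dis[OF B2_] unfolding Yc_def by auto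
    qed
    ultimately show "(Xc t \<union> Yc t) \<inter> (Xc u \<union> Yc u) = {}" using XcX[OF t] XcX[OF u] YcY[OF t] YcY[OF u] XY by blast
  qed
  have nc: "\<forall>t<k. \<forall>u<k. t \<noteq> u \<longrightarrow> (\<forall>\<alpha> \<in> S \<inter> Xc t. \<forall>\<beta> \<in> S \<inter> Yc u. \<not> (h t \<beta> = \<alpha> \<and> h u \<alpha> = \<beta>))"
  proof (intro allI impI ballI notI)
    fix t u \<alpha> \<beta> assume t: "t < k" and u: "u < k" and tu: "t \<noteq> u" and al: "\<alpha> \<in> S \<inter> Xc t"
      and be: "\<beta> \<in> S \<inter> Yc u" and hh: "h t \<beta> = \<alpha> \<and> h u \<alpha> = \<beta>"
    have tn: "\<not> t < n1"
    proof
      assume "t < n1" then have "Xc t = {eF t}" "eF t \<in> X - S" using F1[of t] n1 unfolding Xc_def by auto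
      then show False using al by auto
    qed
    have un: "\<not> u < n1 + nG"
    proof
      assume "u < n1 + nG" then have "Yc u = {eG u}" "eG u \<in> Y - S" using G1[of u] nG unfolding Yc_def by auto
      then show False using be by auto
    qed
    define i where "i = t - n1"
    define j where "j = u - n1 - nG"
    have i: "2 * i + 1 < a" using tn t nA unfolding i_def a_def k_def by arith
    have j: "2 * j + 1 < b" using un u nB unfolding j_def b_def k_def by arith
    have "\<alpha> = eA (2*i) \<or> \<alpha> = eA (2*i + 1)" using al tn unfolding Xc_def i_def by auto
    then obtain e where e: "e < 2" "\<alpha> = eA (2*i + e)"
    proof
      assume "\<alpha> = eA (2*i)" then show thesis using that[of 0] by simp
    next
      assume "\<alpha> = eA (2*i + 1)" then show thesis using that[of 1] by simp
    qed
    have "\<beta> = eB (2*j) \<or> \<beta> = eB (2*j + 1)" using be un unfolding Yc_def j_def by auto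
    then obtain d where d: "d < 2" "\<beta> = eB (2*j + d)"
    proof
      assume "\<beta> = eB (2*j)" then show thesis using that[of 0] by simp
    next
      assume "\<beta> = eB (2*j + 1)" then show thesis using that[of 1] by simp
    qed
    have ie: "2*i + e < a" and jd: "2*j + d < b" using i j e d by linarith+
    have pa: "pA \<alpha> = e" using pA[OF ie] e by simp
    have pb: "pB \<beta> = d" using pB[OF jd] d by simp
    have bY: "\<beta> \<in> Y" using be YcY[OF u] by auto
    have aX: "\<alpha> \<in> X" using al XcX[OF t] by auto
    have "h t \<beta> = eA (2*i + d)" using notX[OF bY] tn pb unfolding h_def i_def by simp
    then have "eA (2*i + d) = eA (2*i + e)" using hh e by simp
    then have de: "d = e" using A2[of "2*i+d" "2*i+e"] ie i d unfolding a_def by simp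
    have "h u \<alpha> = eB (2*j + (1 - e))" using aX un pa unfolding h_def j_def by simp
    then have "eB (2*j + (1 - e)) = eB (2*j + d)" using hh d by simp
    moreover have "2*j + (1 - e) < b" using j by linarith
    ultimately have "1 - e = d" using B2[of "2*j + (1 - e)" "2*j+d"] jd unfolding b_def by simp
    then show False using de e by arith
  qed
  show ?thesis unfolding k_def[symmetric]
    by (rule family_exists[OF fX fY XY SXY g dis nc])
qed



lemma cb_sym: "complete_bipartite X Y = complete_bipartite Y X"
  unfolding complete_bipartite_def by (auto simp: insert_commute)

lemma bound_real:
  assumes "a + 2*f + g \<le> 3*k + 2" "k \<le> K" "m1 = a + f" "m2 = b + g" "s = a + b"
  shows "real m1 - (real m1 + real s - real m2 + 2) / 3 \<le> real K"
proof -
  have "real (a + 2*f + g) \<le> real (3*k + 2)" using assms(1) by (simp only: of_nat_le_iff)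
  then have h1: "real a + 2 * real f + real g \<le> 3 * real k + 2" by simp
  have h2: "real k \<le> real K" using assms(2) by simp
  have "real m1 = real a + real f" "real m2 = real b + real g" "real s = real a + real b" using assms(3-5) by simp_all
  then show ?thesis using h1 h2 by (simp add: field_simps)
qed

lemma card_split:
  assumes "finite X" "finite Y" "X \<inter> Y = {}" "S \<subseteq> X \<union> Y"
  shows "card (S \<inter> X) + card (X - S) = card X" "card (S \<inter> Y) + card (Y - S) = card Y"
    "card (S \<inter> X) + card (S \<inter> Y) = card S"
proof -
  have "X = (S \<inter> X) \<union> (X - S)" by auto
  then have "card X = card (S \<inter> X) + card (X - S)" using assms(1) by (metis card_Un_disjoint Diff_disjoint Int_Diff_disjoint finite_Diff finite_Int inf_commute)
  then show "card (S \<inter> X) + card (X - S) = card X" by simp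
  have "Y = (S \<inter> Y) \<union> (Y - S)" by auto
  then have "card Y = card (S \<inter> Y) + card (Y - S)" using assms(2) by (metis card_Un_disjoint Diff_disjoint Int_Diff_disjoint finite_Diff finite_Int inf_commute)
  then show "card (S \<inter> Y) + card (Y - S) = card Y" by simp
  have "S = (S \<inter> X) \<union> (S \<inter> Y)" using assms(4) by auto
  moreover have "(S \<inter> X) \<inter> (S \<inter> Y) = {}" using assms(3) by auto
  ultimately show "card (S \<inter> X) + card (S \<inter> Y) = card S" using assms(1,2) by (metis card_Un_disjoint finite_Int inf_commute)
qed

lemma part3_S:
  assumes fX: "finite X" and fY: "finite Y" and XY: "X \<inter> Y = {}" and SXY: "S \<subseteq> X \<union> Y"
    and cS: "card S = s" and s2: "2 \<le> s" and m12: "card X \<le> card Y" and sl: "card Y - card X + 3 \<le> s"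
  shows "real (card X) - (real (card X) + real s - real (card Y) + 2) / 3 \<le> real (kappa_star (complete_bipartite X Y) S)"
proof -
  define a where "a = card (S \<inter> X)"
  define b where "b = card (S \<inter> Y)"
  define f where "f = card (X - S)"
  define g where "g = card (Y - S)"
  have m1: "card X = a + f" and m2: "card Y = b + g" and sab: "s = a + b"
    using card_split[OF fX fY XY SXY] cS unfolding a_def b_def f_def g_def by auto
  have YX: "Y \<inter> X = {}" and SYX: "S \<subseteq> Y \<union> X" using XY SXY by auto
  have c1: "a + f \<le> b + g" using m12 m1 m2 by simp
  have c2: "g + 3 \<le> 2*a + f" using sl m1 m2 sab c1 by simp
  have S2: "2 \<le> card S" using cS s2 by simp
  have "\<exists>k0. (\<exists>T. compl_indep_family (complete_bipartite X Y) S k0 T) \<and> a + 2*f + g \<le> 3*k0 + 2"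
  proof (cases "b = 0")
    case True
    then have SX: "S \<subseteq> X" using SXY fY unfolding b_def by auto
    have "\<exists>T. compl_indep_family (complete_bipartite X Y) S (card Y) T" by (rule cons_starsY[OF fX fY XY SX S2])
    moreover have "a + 2*f + g \<le> 3*(card Y) + 2" using m2 True c1 by simp
    ultimately show ?thesis by blast
  next
    case bne: False
    show ?thesis
    proof (cases "a = 0")
      case True
      then have SY: "S \<subseteq> Y" using SXY fX unfolding a_def by auto
      have "\<exists>T. compl_indep_family (complete_bipartite Y X) S (card X) T" by (rule cons_starsY[OF fY fX YX SY S2])
      then have "\<exists>T. compl_indep_family (complete_bipartite X Y) S (card X) T" using cb_sym by metis
      moreover have "a + 2*f + g \<le> 3*(card X) + 2" using m1 True c2 by simp
      ultimately show ?thesis by blast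
    next
      case ane: False
      have A1: "S \<inter> X \<noteq> {}" using ane unfolding a_def by auto
      have B1: "S \<inter> Y \<noteq> {}" using bne unfolding b_def by auto
      have A1': "S \<inter> Y \<noteq> {}" "S \<inter> X \<noteq> {}" using A1 B1 by auto
      show ?thesis
      proof (cases "f \<le> g")
        case fg: True
        show ?thesis
        proof (cases "a \<le> 2 * (g - f) + 2")
          case True
          define q where "q = min a (g - f)"
          have a2: "a \<noteq> 1" using c2 fg by simp
          have "\<exists>T. compl_indep_family (complete_bipartite X Y) S (f + q) T"
            apply (rule cons_C1[OF fX fY XY SXY A1 B1])
            using a2 fg unfolding q_def a_def f_def g_def by auto
          moreover have "a + 2*f + g \<le> 3*(f + q) + 2" using True fg c2 unfolding q_def by auto
          ultimately show ?thesis by blast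
        next
          case False
          define nS where "nS = (a - 2*(g - f)) div 2"
          have "\<exists>T. compl_indep_family (complete_bipartite X Y) S (f + (g - f) + nS) T"
            apply (rule cons_typed[OF fX fY XY SXY A1 B1])
            using False fg c1 unfolding nS_def a_def b_def f_def g_def by auto
          moreover have "a + 2*f + g \<le> 3*(f + (g - f) + nS) + 2" using False fg unfolding nS_def by auto
          ultimately show ?thesis by blast
        qed
      next
        case gf: False
        show ?thesis
        proof (cases "a + g \<le> f + 2")
          case True
          have "\<exists>T. compl_indep_family (complete_bipartite Y X) S (g + (f - g)) T"
            apply (rule cons_C1[OF fY fX YX SYX A1'])
            using gf c1 unfolding a_def b_def f_def g_def by (auto simp: Int_commute)
          then have "\<exists>T. compl_indep_family (complete_bipartite X Y) S (g + (f - g)) T" using cb_sym by metis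
          moreover have "a + 2*f + g \<le> 3*(g + (f - g)) + 2" using True gf by auto
          ultimately show ?thesis by blast
        next
          case False
          define l where "l = a div 2"
          define j where "j = min (f - g) ((b - 2*l) div 2)"
          have "\<exists>T. compl_indep_family (complete_bipartite Y X) S (g + j + l) T"
            apply (rule cons_typed[OF fY fX YX SYX A1'])
            using gf c1 unfolding j_def l_def a_def b_def f_def g_def by (auto simp: Int_commute)
          then have "\<exists>T. compl_indep_family (complete_bipartite X Y) S (g + j + l) T" using cb_sym by metis
          moreover have "a + 2*f + g \<le> 3*(g + j + l) + 2" using False gf c1 unfolding j_def l_def by auto
          ultimately show ?thesis by blast
        qed
      qed
    qed
  qed
  then obtain k0 T where fam: "compl_indep_family (complete_bipartite X Y) S k0 T" and k0: "a + 2*f + g \<le> 3*k0 + 2" by blast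
  have "k0 \<le> kappa_star (complete_bipartite X Y) S" by (rule kappa_star_ge[OF fX fY S2 fam])
  then show ?thesis using bound_real[OF k0 _ m1 m2 sab] by blast
qed

theorem corollary3p8:
  fixes X Y :: "'a set" and m1 m2 s :: nat
  assumes "finite X" and "finite Y" and "X \<inter> Y = {}"
    and "card X = m1" and "card Y = m2"
    and "2 \<le> m1" and "m1 \<le> m2" and "2 \<le> s"
  shows "(s \<le> m2 - m1 + 2 \<longrightarrow>
           (\<forall>S. S \<subseteq> X \<union> Y \<and> card S = s \<and> \<not> S \<subseteq> X \<longrightarrow>
                kappa_star (complete_bipartite X Y) S = m1))
       \<and> (s \<le> m1 \<longrightarrow>
           (\<forall>S. S \<subseteq> X \<and> card S = s \<longrightarrow> kappa_star (complete_bipartite X Y) S = m2))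
       \<and> (m2 - m1 + 3 \<le> s \<and> s \<le> m1 + m2 \<longrightarrow>
           real (kappa_star_s s (complete_bipartite X Y))
             \<ge> real m1 - (real m1 + real s - real m2 + 2) / 3)"
proof -
  note fX = assms(1) and fY = assms(2) and XY = assms(3) and cX = assms(4) and cY = assms(5)
  have YX: "Y \<inter> X = {}" using XY by auto
  have P1: "kappa_star (complete_bipartite X Y) S = m1"
    if sl: "s \<le> m2 - m1 + 2" and SXY: "S \<subseteq> X \<union> Y" and cS: "card S = s" and nSX: "\<not> S \<subseteq> X" for S
  proof -
    have S2: "2 \<le> card S" using cS assms(8) by simp
    obtain y where y: "y \<in> S \<inter> Y" using nSX SXY by auto
    have "\<exists>w. w \<in> S \<and> w \<noteq> y"
    proof (rule ccontr)
      assume "\<not> ?thesis"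
      then have "S \<subseteq> {y}" by auto
      then have "card S \<le> 1" using card_mono[of "{y}" S] by simp
      then show False using S2 by simp
    qed
    then obtain w where w: "w \<in> S" "w \<noteq> y" by blast
    have ub: "kappa_star (complete_bipartite X Y) S \<le> m1"
      using kappa_star_le[OF fX fY S2] ub_part1[OF fX fY XY y w] cX by blast
    define a where "a = card (S \<inter> X)"
    define b where "b = card (S \<inter> Y)"
    define f where "f = card (X - S)"
    define g where "g = card (Y - S)"
    have m1: "m1 = a + f" and m2: "m2 = b + g" and sab: "s = a + b"
      using card_split[OF fX fY XY SXY] cS cX cY unfolding a_def b_def f_def g_def by auto
    have c: "2*a + f \<le> g + 2" using sl m1 m2 sab assms(7) by simp
    have "\<exists>T. compl_indep_family (complete_bipartite X Y) S m1 T"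
    proof (cases "S \<inter> X = {}")
      case True
      then have SY: "S \<subseteq> Y" using SXY by auto
      have "\<exists>T. compl_indep_family (complete_bipartite Y X) S (card X) T" by (rule cons_starsY[OF fY fX YX SY S2])
      then show ?thesis using cb_sym cX by metis
    next
      case False
      have B1: "S \<inter> Y \<noteq> {}" using y by auto
      have a0: "a \<noteq> 0" using False fX unfolding a_def by auto
      have "\<exists>T. compl_indep_family (complete_bipartite X Y) S (f + a) T"
        apply (rule cons_C1[OF fX fY XY SXY False B1])
        using c a0 unfolding a_def f_def g_def by auto
      then show ?thesis using m1 by (simp add: add.commute)
    qed
    then have "m1 \<le> kappa_star (complete_bipartite X Y) S" using kappa_star_ge[OF fX fY S2] by blast
    then show ?thesis using ub by simp
  qed
  have P2: "kappa_star (complete_bipartite X Y) S = m2"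
    if SX: "S \<subseteq> X" and cS: "card S = s" for S
  proof -
    have S2: "2 \<le> card S" using cS assms(8) by simp
    have ub: "kappa_star (complete_bipartite X Y) S \<le> m2"
      using kappa_star_le[OF fX fY S2] ub_part2[OF fX fY XY SX S2] cY by blast
    have "\<exists>T. compl_indep_family (complete_bipartite X Y) S (card Y) T" by (rule cons_starsY[OF fX fY XY SX S2])
    then have "m2 \<le> kappa_star (complete_bipartite X Y) S" using kappa_star_ge[OF fX fY S2] cY by blast
    then show ?thesis using ub by simp
  qed
  have P3: "real m1 - (real m1 + real s - real m2 + 2) / 3 \<le> real (kappa_star_s s (complete_bipartite X Y))"
    if sl: "m2 - m1 + 3 \<le> s" and su: "s \<le> m1 + m2"
  proof -
    define K where "K = {kappa_star (complete_bipartite X Y) S | S. S \<subseteq> fst (complete_bipartite X Y) \<and> card S = s}"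
    have fst: "fst (complete_bipartite X Y) = X \<union> Y" unfolding complete_bipartite_def by simp
    have "K \<subseteq> (kappa_star (complete_bipartite X Y)) ` Pow (X \<union> Y)" unfolding K_def fst by auto
    then have fK: "finite K" using fX fY by (meson finite_Pow_iff finite_UnI finite_imageI finite_subset)
    have "card (X \<union> Y) = m1 + m2" using card_Un_disjoint[OF fX fY XY] cX cY by simp
    then obtain S0 where "S0 \<subseteq> X \<union> Y" "card S0 = s" using su obtain_subset_with_card_n by metis
    then have "K \<noteq> {}" unfolding K_def fst by blast
    then have "Min K \<in> K" using fK by (rule Min_in[rotated])
    then obtain S where S: "S \<subseteq> X \<union> Y" "card S = s" and eq: "Min K = kappa_star (complete_bipartite X Y) S"
      unfolding K_def fst by auto
    have "real (card X) - (real (card X) + real s - real (card Y) + 2) / 3 \<le> real (kappa_star (complete_bipartite X Y) S)"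
      by (rule part3_S[OF fX fY XY S(1) S(2) assms(8)]) (use sl cX cY assms(7) in auto)
    then show ?thesis using eq cX cY unfolding kappa_star_s_def K_def[symmetric] by simp
  qed
  show ?thesis using P1 P2 P3 by blast
qed


end
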